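(* Let $\theta\in(0,1)$, $0<\mu\le1/\sqrt n$, and $\mathbf X_0\in\mathbb R^{n\times p}$ with $\mathbf X_0\sim_{i.i.d.}\mathrm{BG}(\theta)$. For every fixed $\mathbf w\in\Gamma\setminus\{\mathbf 0\}$ and every $t>0$, $$\mathbb P\Big[\Big|\frac{\mathbf w^*\nabla^2g(\mathbf w;\mathbf X_0)\mathbf w}{\|\mathbf w\|^2}-\mathbb E\Big[\frac{\mathbf w^*\nabla^2g(\mathbf w;\mathbf X_0)\mathbf w}{\|\mathbf w\|^2}\Big]\Big|\ge t\Big]\le4\exp\Big(-\frac{p\mu^2t^2}{512n^2+32n\mu t}\Big).$$
   Context: $Z\sim\mathrm{BG}(\theta)$ means $Z=BG$ with $B\sim\mathrm{Ber}(\theta)$, $G\sim\mathcal N(0,1)$ independent; $\mathbf X\sim_{i.i.d.}\mathrm{BG}(\theta)$ means all entries are independent $\mathrm{BG}(\theta)$. $h_\mu(z)=\mu\log\cosh(z/\mu)$. For $\mathbf Y\in\mathbb R^{n\times p}$ with columns $\mathbf y_k$, $f(\mathbf q;\mathbf Y)=\frac1p\sum_k h_\mu(\mathbf q^*\mathbf y_k)$; for $\mathbf w$ in the open unit ball of $\mathbb R^{n-1}$, $\mathbf q(\mathbf w)=(\mathbf w,\sqrt{1-\|\mathbf w\|^2})$ and $g(\mathbf w;\mathbf Y)=f(\mathbf q(\mathbf w);\mathbf Y)$; $\nabla^2$ is the Hessian in $\mathbf w$. $\Gamma=\{\mathbf w\in\mathbb R^{n-1}:\|\mathbf w\|<\sqrt{(4n-1)/(4n)}\}$.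 *)

theory Defs
  imports "HOL-Probability.Probability"
begin

definition BG :: "real \<Rightarrow> real measure" where
  "BG \<theta> = distr (measure_pmf (bernoulli_pmf \<theta>) \<Otimes>\<^sub>M density lborel std_normal_density) borel
      (\<lambda>(b, g). (if b then 1 else 0) * g)"

definition BG_matrix :: "nat \<Rightarrow> nat \<Rightarrow> real \<Rightarrow> (nat \<times> nat \<Rightarrow> real) measure" where
  "BG_matrix n p \<theta> = (\<Pi>\<^sub>M ik \<in> {..<n} \<times> {..<p}. BG \<theta>)"

definition h_mu :: "real \<Rightarrow> real \<Rightarrow> real" where
  "h_mu \<mu> z = \<mu> * ln (cosh (z / \<mu>))"

definition f_obj :: "nat \<Rightarrow> nat \<Rightarrow> real \<Rightarrow> (nat \<Rightarrow> real) \<Rightarrow> (nat \<times> nat \<Rightarrow> real) \<Rightarrow> real" where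
  "f_obj n p \<mu> q Y = (1 / real p) * (\<Sum>k<p. h_mu \<mu> (\<Sum>i<n. q i * Y (i, k)))"

definition sqnorm :: "nat \<Rightarrow> (nat \<Rightarrow> real) \<Rightarrow> real" where
  "sqnorm m w = (\<Sum>i<m. (w i)\<^sup>2)"

definition q_map :: "nat \<Rightarrow> (nat \<Rightarrow> real) \<Rightarrow> (nat \<Rightarrow> real)" where
  "q_map n w = (\<lambda>i. if i < n - 1 then w i
                     else if i = n - 1 then sqrt (1 - sqnorm (n - 1) w) else 0)"

definition g_obj :: "nat \<Rightarrow> nat \<Rightarrow> real \<Rightarrow> (nat \<Rightarrow> real) \<Rightarrow> (nat \<times> nat \<Rightarrow> real) \<Rightarrow> real" where
  "g_obj n p \<mu> w Y = f_obj n p \<mu> (q_map n w) Y"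

definition partial :: "((nat \<Rightarrow> real) \<Rightarrow> real) \<Rightarrow> nat \<Rightarrow> (nat \<Rightarrow> real) \<Rightarrow> real" where
  "partial F j w = deriv (\<lambda>r. F (w(j := r))) (w j)"

definition hessian :: "((nat \<Rightarrow> real) \<Rightarrow> real) \<Rightarrow> (nat \<Rightarrow> real) \<Rightarrow> nat \<Rightarrow> nat \<Rightarrow> real" where
  "hessian F w i j = partial (\<lambda>v. partial F j v) i w"

definition hess_quad :: "nat \<Rightarrow> ((nat \<Rightarrow> real) \<Rightarrow> real) \<Rightarrow> (nat \<Rightarrow> real) \<Rightarrow> real" where
  "hess_quad m F w = (\<Sum>i<m. \<Sum>j<m. w i * hessian F w i j * w j)"

definition Gamma_set :: "nat \<Rightarrow> (nat \<Rightarrow> real) set" where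
  "Gamma_set n = {w. sqnorm (n - 1) w < (4 * real n - 1) / (4 * real n)}"

end

theory Submission
  imports Defs
begin


lemma h_mu_deriv:
  assumes "\<mu> > 0"
  shows "((\<lambda>z. h_mu \<mu> z) has_real_derivative tanh (z / \<mu>)) (at z)"
  unfolding h_mu_def
  using assms
  by (auto intro!: derivative_eq_intros simp: tanh_def field_simps)

lemma sum_upd:
  fixes F :: "'a \<Rightarrow> 'b \<Rightarrow> real"
  assumes "finite A" "j \<in> A"
  shows "(\<Sum>i\<in>A. F i ((v(j:=r)) i)) = (\<Sum>i\<in>A. F i (v i)) - F j (v j) + F j r"
proof -
  have "(\<Sum>i\<in>A. F i ((v(j:=r)) i)) = F j r + (\<Sum>i\<in>A-{j}. F i ((v(j:=r)) i))"
    using assms by (simp add: sum.remove)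
  also have "(\<Sum>i\<in>A-{j}. F i ((v(j:=r)) i)) = (\<Sum>i\<in>A-{j}. F i (v i))"
    by (rule sum.cong) auto
  also have "\<dots> = (\<Sum>i\<in>A. F i (v i)) - F j (v j)"
    using assms sum.remove[of A j "\<lambda>i. F i (v i)"] by simp
  finally show ?thesis by simp
qed

lemma phi_deriv:
  assumes "1 - (C2 + r0\<^sup>2) > 0"
  shows "((\<lambda>r. C1 + r * a + sqrt (1 - (C2 + r\<^sup>2)) * b) has_real_derivative
           (a - r0 * b / sqrt (1 - (C2 + r0\<^sup>2)))) (at r0)"
  using assms
  by (auto intro!: derivative_eq_intros simp: field_simps power2_eq_square)

definition zz :: "nat \<Rightarrow> (nat \<Rightarrow> real) \<Rightarrow> (nat \<times> nat \<Rightarrow> real) \<Rightarrow> nat \<Rightarrow> real" where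
  "zz n v X k = (\<Sum>i<n-1. v i * X (i,k)) + sqrt (1 - sqnorm (n-1) v) * X (n-1,k)"

lemma g_eq:
  assumes "n \<ge> 1"
  shows "g_obj n p \<mu> v X = (1 / real p) * (\<Sum>k<p. h_mu \<mu> (zz n v X k))"
proof -
  obtain N where n: "n = Suc N" using assms by (cases n) auto
  have "(\<Sum>i<n. q_map n v i * X (i, k)) = zz n v X k" for k
    unfolding n by (simp add: zz_def q_map_def)
  then show ?thesis unfolding g_obj_def f_obj_def by simp
qed

lemma sqnorm_upd:
  assumes "j < m"
  shows "sqnorm m (v(j:=r)) = (sqnorm m v - (v j)\<^sup>2) + r\<^sup>2"
  unfolding sqnorm_def using sum_upd[of "{..<m}" j "\<lambda>i x. x\<^sup>2" v r] assms by simp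

lemma zz_upd:
  assumes "j < n - 1"
  shows "zz n (v(j:=r)) X k = ((\<Sum>i<n-1. v i * X (i,k)) - v j * X (j,k)) + r * X (j,k)
           + sqrt (1 - ((sqnorm (n-1) v - (v j)\<^sup>2) + r\<^sup>2)) * X (n-1,k)"
  unfolding zz_def sqnorm_upd[OF assms]
  using sum_upd[of "{..<n-1}" j "\<lambda>i x. x * X (i,k)" v r] assms by simp

definition Dg :: "nat \<Rightarrow> nat \<Rightarrow> real \<Rightarrow> (nat \<times> nat \<Rightarrow> real) \<Rightarrow> nat \<Rightarrow> (nat \<Rightarrow> real) \<Rightarrow> real" where
  "Dg n p \<mu> X j v = (1 / real p) * (\<Sum>k<p. tanh (zz n v X k / \<mu>) *
      (X (j,k) - v j * X (n-1,k) / sqrt (1 - sqnorm (n-1) v)))"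

lemma has_deriv_g:
  assumes "j < n - 1" "sqnorm (n-1) v < 1" "\<mu> > 0"
  shows "((\<lambda>r. g_obj n p \<mu> (v(j:=r)) X) has_real_derivative Dg n p \<mu> X j v) (at (v j))"
proof -
  have n: "n \<ge> 1" using assms by simp
  have k: "((\<lambda>r. h_mu \<mu> (zz n (v(j:=r)) X k)) has_real_derivative
          tanh (zz n v X k / \<mu>) * (X (j,k) - v j * X (n-1,k) / sqrt (1 - sqnorm (n-1) v))) (at (v j))" for k
  proof -
    have "1 - ((sqnorm (n-1) v - (v j)\<^sup>2) + (v j)\<^sup>2) > 0" using assms by simp
    note d = DERIV_chain2[OF h_mu_deriv[OF assms(3)] phi_deriv[OF this,
        of "(\<Sum>i<n-1. v i * X (i,k)) - v j * X (j,k)" "X (j,k)" "X (n-1,k)"]]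
    have e: "(\<Sum>i<n-1. v i * X (i,k)) - v j * X (j,k) + v j * X (j,k) +
        sqrt (1 - (sqnorm (n - 1) v - (v j)\<^sup>2 + (v j)\<^sup>2)) * X (n - 1, k) = zz n v X k"
      by (simp add: zz_def)
    show ?thesis
      using d unfolding zz_upd[OF assms(1)] e by simp
  qed
  show ?thesis
    unfolding g_eq[OF n] Dg_def
    by (intro DERIV_cmult DERIV_sum k)
qed

lemma partial_g:
  assumes "j < n - 1" "sqnorm (n-1) v < 1" "\<mu> > 0"
  shows "partial (\<lambda>v. g_obj n p \<mu> v X) j v = Dg n p \<mu> X j v"
  unfolding partial_def using has_deriv_g[OF assms] by (rule DERIV_imp_deriv)

lemma psi_deriv:
  assumes "1 - (C2 + r0\<^sup>2) > 0" "(u has_real_derivative du) (at r0)"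
  shows "((\<lambda>r. a - u r * b / sqrt (1 - (C2 + r\<^sup>2))) has_real_derivative
           (- (du * b / sqrt (1 - (C2 + r0\<^sup>2)) + u r0 * b * r0 / sqrt (1 - (C2 + r0\<^sup>2)) ^ 3))) (at r0)"
proof -
  define s where "s = sqrt (1 - (C2 + r0\<^sup>2))"
  have s: "s > 0" using assms(1) by (simp add: s_def)
  have ss: "s * s = 1 - (C2 + r0\<^sup>2)" using assms(1) unfolding s_def
    by (simp add: real_sqrt_mult[symmetric])
  show ?thesis
    using assms s
    apply -
    apply (rule derivative_eq_intros refl | assumption | simp)+
    unfolding s_def[symmetric]
    apply (simp add: field_simps power3_eq_cube ss)
    apply (subgoal_tac "s - (C2 * s + s * r0\<^sup>2) > 0")
     apply (simp add: field_simps)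
    using s assms(1) mult_pos_pos[of s "1 - (C2 + r0\<^sup>2)"] by (simp add: algebra_simps)
qed

definition Hg :: "nat \<Rightarrow> nat \<Rightarrow> real \<Rightarrow> (nat \<times> nat \<Rightarrow> real) \<Rightarrow> (nat \<Rightarrow> real) \<Rightarrow> nat \<Rightarrow> nat \<Rightarrow> real" where
  "Hg n p \<mu> X w i j = (1 / real p) * (\<Sum>k<p.
      (1 - (tanh (zz n w X k / \<mu>))\<^sup>2) / \<mu> *
        (X (i,k) - w i * X (n-1,k) / sqrt (1 - sqnorm (n-1) w)) *
        (X (j,k) - w j * X (n-1,k) / sqrt (1 - sqnorm (n-1) w))
      - tanh (zz n w X k / \<mu>) * X (n-1,k) *
        ((if i = j then 1 else 0) / sqrt (1 - sqnorm (n-1) w)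
          + w i * w j / sqrt (1 - sqnorm (n-1) w) ^ 3))"

lemma has_deriv_Dg:
  assumes "i < n - 1" "j < n - 1" "sqnorm (n-1) w < 1" "\<mu> > 0"
  shows "((\<lambda>r. Dg n p \<mu> X j (w(i:=r))) has_real_derivative Hg n p \<mu> X w i j) (at (w i))"
proof -
  define C2 where "C2 = sqnorm (n - 1) w - (w i)\<^sup>2"
  define C1 where "C1 k = (\<Sum>l<n-1. w l * X (l,k)) - w i * X (i,k)" for k
  have pos: "1 - (C2 + (w i)\<^sup>2) > 0" using assms by (simp add: C2_def)
  have sq: "C2 + (w i)\<^sup>2 = sqnorm (n-1) w" by (simp add: C2_def)
  have du: "((\<lambda>r. (w(i:=r)) j) has_real_derivative (if i = j then 1 else 0)) (at (w i))"
    by (cases "i = j") (auto intro!: derivative_eq_intros)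
  have k: "((\<lambda>r. tanh (zz n (w(i:=r)) X k / \<mu>) *
       (X (j,k) - (w(i:=r)) j * X (n-1,k) / sqrt (1 - sqnorm (n-1) (w(i:=r))))) has_real_derivative
      ((1 - (tanh (zz n w X k / \<mu>))\<^sup>2) / \<mu> *
        (X (i,k) - w i * X (n-1,k) / sqrt (1 - sqnorm (n-1) w)) *
        (X (j,k) - w j * X (n-1,k) / sqrt (1 - sqnorm (n-1) w))
      - tanh (zz n w X k / \<mu>) * X (n-1,k) *
        ((if i = j then 1 else 0) / sqrt (1 - sqnorm (n-1) w)
          + w i * w j / sqrt (1 - sqnorm (n-1) w) ^ 3))) (at (w i))" for k
  proof -
    have zr: "zz n (w(i:=r)) X k = C1 k + r * X (i,k) + sqrt (1 - (C2 + r\<^sup>2)) * X (n-1,k)" for r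
      unfolding zz_upd[OF assms(1)] C1_def C2_def by simp
    have sr: "sqnorm (n-1) (w(i:=r)) = C2 + r\<^sup>2" for r
      unfolding sqnorm_upd[OF assms(1)] C2_def by simp
    have z0: "C1 k + w i * X (i,k) + sqrt (1 - (C2 + (w i)\<^sup>2)) * X (n-1,k) = zz n w X k"
      by (simp add: C1_def zz_def sq)
    have z0': "C1 k + w i * X (i,k) + sqrt (1 - sqnorm (n-1) w) * X (n-1,k) = zz n w X k"
      using z0 sq by simp
    note d1 = phi_deriv[OF pos, of "C1 k" "X (i,k)" "X (n-1,k)"]
    note d2 = DERIV_cdivide[OF d1, of \<mu>]
    note d3 = has_field_derivative_tanh[OF _ d2]
    note d4 = psi_deriv[OF pos du, of "X (j,k)" "X (n-1,k)"]
    note d5 = DERIV_mult[OF d3 d4]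
    note d6 = d5[unfolded z0 sq]
    have spos: "sqrt (1 - sqnorm (n-1) w) > 0" using assms by simp
    show ?thesis
      unfolding zr sr
      apply (rule DERIV_cong[OF d6])
       apply simp
      apply (simp only: sq z0' fun_upd_triv)
      using spos \<open>\<mu> > 0\<close>
      apply (cases "i = j")
       apply (simp_all add: field_simps)
      done
  qed
  show ?thesis
    unfolding Dg_def Hg_def
    by (intro DERIV_cmult DERIV_sum k)
qed

lemma hessian_g:
  assumes "i < n - 1" "j < n - 1" "sqnorm (n-1) w < 1" "\<mu> > 0"
  shows "hessian (\<lambda>v. g_obj n p \<mu> v X) w i j = Hg n p \<mu> X w i j"
proof -
  define S where "S = {r. (sqnorm (n - 1) w - (w i)\<^sup>2) + r\<^sup>2 < 1}"
  have oS: "open S" unfolding S_def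
    by (intro open_Collect_less continuous_intros)
  have wS: "w i \<in> S" using assms by (simp add: S_def)
  have eq: "Dg n p \<mu> X j (w(i:=r)) = partial (\<lambda>v. g_obj n p \<mu> v X) j (w(i:=r))" if "r \<in> S" for r
  proof -
    have "sqnorm (n-1) (w(i:=r)) < 1"
      using that unfolding S_def sqnorm_upd[OF assms(1)] by simp
    then show ?thesis using partial_g[OF assms(2) _ assms(4)] by simp
  qed
  have "((\<lambda>r. partial (\<lambda>v. g_obj n p \<mu> v X) j (w(i:=r))) has_real_derivative Hg n p \<mu> X w i j) (at (w i))"
    by (rule has_field_derivative_transform_within_open[OF has_deriv_Dg[OF assms] oS wS eq])
  then show ?thesis
    unfolding hessian_def partial_def[of "\<lambda>v. partial _ j v"]
    by (rule DERIV_imp_deriv)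
qed

lemma quad_sum:
  fixes w a :: "nat \<Rightarrow> real"
  assumes "finite A"
  shows "(\<Sum>i\<in>A. \<Sum>j\<in>A. w i * (c * a i * a j - d * ((if i = j then 1 else 0) / s + w i * w j / s3)) * w j)
       = c * (\<Sum>i\<in>A. w i * a i)\<^sup>2 - d * ((\<Sum>i\<in>A. (w i)\<^sup>2) / s + (\<Sum>i\<in>A. (w i)\<^sup>2)\<^sup>2 / s3)"
proof -
  have e1: "(\<Sum>i\<in>A. \<Sum>j\<in>A. w i * (c * a i * a j) * w j) = c * (\<Sum>i\<in>A. w i * a i)\<^sup>2"
    by (simp add: power2_eq_square sum_product sum_distrib_left mult_ac)
  have e2: "(\<Sum>i\<in>A. \<Sum>j\<in>A. w i * (d * ((if i = j then 1 else 0) / s)) * w j) = d * ((\<Sum>i\<in>A. (w i)\<^sup>2) / s)"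
  proof -
    have "(\<Sum>i\<in>A. \<Sum>j\<in>A. w i * (d * ((if i = j then 1 else 0) / s)) * w j)
        = (\<Sum>i\<in>A. \<Sum>j\<in>A. (if i = j then w i * (d / s) * w j else 0))"
      by (intro sum.cong) auto
    also have "\<dots> = (\<Sum>i\<in>A. w i * (d / s) * w i)"
      using assms by (simp add: sum.delta)
    finally show ?thesis by (simp add: sum_distrib_left sum_divide_distrib power2_eq_square mult_ac)
  qed
  have e3: "(\<Sum>i\<in>A. \<Sum>j\<in>A. w i * (d * (w i * w j / s3)) * w j) = d * ((\<Sum>i\<in>A. (w i)\<^sup>2)\<^sup>2 / s3)"
    by (simp add: power2_eq_square sum_product sum_distrib_left sum_divide_distrib mult_ac)
  have "(\<Sum>i\<in>A. \<Sum>j\<in>A. w i * (c * a i * a j - d * ((if i = j then 1 else 0) / s + w i * w j / s3)) * w j)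
     = (\<Sum>i\<in>A. \<Sum>j\<in>A. w i * (c * a i * a j) * w j) - (\<Sum>i\<in>A. \<Sum>j\<in>A. w i * (d * ((if i = j then 1 else 0) / s)) * w j)
       - (\<Sum>i\<in>A. \<Sum>j\<in>A. w i * (d * (w i * w j / s3)) * w j)"
    by (simp add: algebra_simps sum_subtractf sum.distrib)
  then show ?thesis using e1 e2 e3 by (simp add: algebra_simps)
qed

definition LL :: "nat \<Rightarrow> (nat \<Rightarrow> real) \<Rightarrow> (nat \<times> nat \<Rightarrow> real) \<Rightarrow> nat \<Rightarrow> real" where
  "LL n w X k = (\<Sum>i<n-1. w i * X (i,k)) - sqnorm (n-1) w * X (n-1,k) / sqrt (1 - sqnorm (n-1) w)"

definition aa :: "nat \<Rightarrow> real \<Rightarrow> (nat \<Rightarrow> real) \<Rightarrow> (nat \<times> nat \<Rightarrow> real) \<Rightarrow> nat \<Rightarrow> real" where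
  "aa n \<mu> w X k = (1 - (tanh (zz n w X k / \<mu>))\<^sup>2) / \<mu> * (LL n w X k)\<^sup>2 / sqnorm (n-1) w"

definition bb :: "nat \<Rightarrow> real \<Rightarrow> (nat \<Rightarrow> real) \<Rightarrow> (nat \<times> nat \<Rightarrow> real) \<Rightarrow> nat \<Rightarrow> real" where
  "bb n \<mu> w X k = tanh (zz n w X k / \<mu>) * X (n-1,k) / sqrt (1 - sqnorm (n-1) w) ^ 3"

lemma Z_eq:
  assumes "sqnorm (n-1) w < 1" "sqnorm (n-1) w \<noteq> 0" "\<mu> > 0"
  shows "hess_quad (n-1) (\<lambda>v. g_obj n p \<mu> v X) w / sqnorm (n-1) w
       = (1 / real p) * (\<Sum>k<p. aa n \<mu> w X k - bb n \<mu> w X k)"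
proof -
  define S where "S = sqnorm (n-1) w"
  define s where "s = sqrt (1 - S)"
  have s: "s > 0" using assms by (simp add: s_def S_def)
  have ss: "s\<^sup>2 = 1 - S" using assms by (simp add: s_def S_def)
  define c where "c k = (1 - (tanh (zz n w X k / \<mu>))\<^sup>2) / \<mu>" for k
  define d where "d k = tanh (zz n w X k / \<mu>) * X (n-1,k)" for k
  define a where "a k i = X (i,k) - w i * X (n-1,k) / s" for k i
  have H: "Hg n p \<mu> X w i j = (1 / real p) * (\<Sum>k<p.
        c k * a k i * a k j - d k * ((if i = j then 1 else 0) / s + w i * w j / s ^ 3))" for i j
    unfolding Hg_def c_def d_def a_def s_def S_def by (simp add: mult_ac)
  have "hess_quad (n-1) (\<lambda>v. g_obj n p \<mu> v X) w
      = (\<Sum>i<n-1. \<Sum>j<n-1. w i * Hg n p \<mu> X w i j * w j)"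
    unfolding hess_quad_def using hessian_g[OF _ _ assms(1,3)] by simp
  also have "\<dots> = (1 / real p) * (\<Sum>k<p. \<Sum>i<n-1. \<Sum>j<n-1.
        w i * (c k * a k i * a k j - d k * ((if i = j then 1 else 0) / s + w i * w j / s ^ 3)) * w j)"
    unfolding H
    by (simp add: sum_distrib_left sum_distrib_right mult_ac sum.swap[of _ "{..<p}"])
  also have "\<dots> = (1 / real p) * (\<Sum>k<p. c k * (LL n w X k)\<^sup>2 - d k * (S / s + S\<^sup>2 / s ^ 3))"
  proof -
    have "(\<Sum>i<n-1. w i * a k i) = LL n w X k" for k
      unfolding a_def LL_def S_def sqnorm_def s_def
      by (simp add: algebra_simps sum_subtractf sum_distrib_left sum_divide_distrib power2_eq_square
               flip: sum_distrib_right)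
    then show ?thesis
      by (simp add: quad_sum S_def sqnorm_def)
  qed
  also have "\<dots> = (1 / real p) * (\<Sum>k<p. aa n \<mu> w X k - bb n \<mu> w X k) * S"
  proof -
    have e: "S * S + S * (s * s) = S" using ss
      by (metis distrib_left mult.right_neutral power2_eq_square add.commute diff_add_cancel)
    have "S / s + S\<^sup>2 / s ^ 3 = S / s ^ 3"
      using s ss e by (simp add: field_simps power2_eq_square power3_eq_cube)
    moreover have "c k * (LL n w X k)\<^sup>2 - d k * (S / s ^ 3) = (aa n \<mu> w X k - bb n \<mu> w X k) * S" for k
      using assms(2,3) unfolding aa_def bb_def c_def d_def S_def s_def
      by (simp add: field_simps)
    ultimately show ?thesis by (simp add: sum_distrib_right sum_distrib_left mult_ac)
  qed
  finally show ?thesis using assms(2) unfolding S_def by simp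
qed




lemma prob_space_std_normal: "prob_space (density lborel std_normal_density)"
  using prob_space_normal_density[of 1 0] by simp

lemma sets_BG[simp, measurable_cong]: "sets (BG \<theta>) = sets borel"
  by (simp add: BG_def)

lemma space_BG[simp]: "space (BG \<theta>) = UNIV"
  by (simp add: BG_def)

lemma prob_space_BG:
  assumes "0 \<le> \<theta>" "\<theta> \<le> 1"
  shows "prob_space (BG \<theta>)"
proof -
  interpret N: prob_space "density lborel std_normal_density" by (rule prob_space_std_normal)
  interpret B: prob_space "measure_pmf (bernoulli_pmf \<theta>)" by (rule prob_space_measure_pmf)
  interpret P: pair_prob_space "measure_pmf (bernoulli_pmf \<theta>)" "density lborel std_normal_density" ..
  show ?thesis unfolding BG_def
    by (intro P.prob_space_distr) measurable
qed

lemma nn_integral_BG: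
  assumes "0 \<le> \<theta>" "\<theta> \<le> 1" and f[measurable]: "f \<in> borel_measurable borel"
  shows "(\<integral>\<^sup>+ y. f y \<partial>BG \<theta>) =
     ennreal \<theta> * (\<integral>\<^sup>+ x. ennreal (std_normal_density x) * f x \<partial>lborel) + ennreal (1 - \<theta>) * f 0"
proof -
  interpret N: prob_space "density lborel std_normal_density" by (rule prob_space_std_normal)
  have "(\<integral>\<^sup>+ y. f y \<partial>BG \<theta>) = (\<integral>\<^sup>+ bg. f ((\<lambda>(b, g). (if b then 1 else 0) * g) bg)
          \<partial>(measure_pmf (bernoulli_pmf \<theta>) \<Otimes>\<^sub>M density lborel std_normal_density))"
    unfolding BG_def by (rule nn_integral_distr) measurable
  also have "\<dots> = (\<integral>\<^sup>+ b. \<integral>\<^sup>+ g. f ((if b then 1 else 0) * g) \<partial>density lborel std_normal_density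
                    \<partial>measure_pmf (bernoulli_pmf \<theta>))"
  proof -
    have meas: "(\<lambda>bg. f ((\<lambda>(b, g). (if b then 1 else 0) * g) bg)) \<in> borel_measurable
        (measure_pmf (bernoulli_pmf \<theta>) \<Otimes>\<^sub>M density lborel std_normal_density)"
      by measurable
    show ?thesis using N.nn_integral_fst[OF meas] by simp
  qed
  also have "\<dots> = (\<integral>\<^sup>+ g. f g \<partial>density lborel std_normal_density) * ennreal \<theta>
                 + (\<integral>\<^sup>+ g. f 0 \<partial>density lborel std_normal_density) * ennreal (1 - \<theta>)"
    using assms by (subst nn_integral_bernoulli_pmf) auto
  also have "(\<integral>\<^sup>+ g. f 0 \<partial>density lborel std_normal_density) = f 0"
    using N.emeasure_space_1 by simp
  also have "(\<integral>\<^sup>+ g. f g \<partial>density lborel std_normal_density) =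
       (\<integral>\<^sup>+ x. ennreal (std_normal_density x) * f x \<partial>lborel)"
    by (subst nn_integral_density) auto
  finally show ?thesis by (simp add: mult_ac)
qed

definition GM :: "nat \<Rightarrow> real" where "GM k = fact (2*k) / (2^k * fact k)"

lemma GM_pos: "GM k > 0" by (simp add: GM_def)

lemma sum_even_odd:
  fixes F :: "nat \<Rightarrow> 'a::comm_monoid_add"
  shows "(\<Sum>j\<le>2*m. F j) = (\<Sum>k\<le>m. F (2*k)) + (\<Sum>k<m. F (2*k+1))"
proof (induction m)
  case 0 then show ?case by simp
next
  case (Suc m)
  have "{..2 * Suc m} = insert (Suc (Suc (2*m))) (insert (Suc (2*m)) {..2*m})" by auto
  then have "(\<Sum>j\<le>2*Suc m. F j) = F (Suc (Suc (2*m))) + F (Suc (2*m)) + (\<Sum>j\<le>2*m. F j)"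
    by (simp add: add_ac)
  then show ?case using Suc by (simp add: add_ac)
qed

lemma gauss_poly:
  fixes b c :: real and m :: nat
  defines "P \<equiv> (\<lambda>y. std_normal_density y * (c + b*y)^(2*m))"
  shows "integrable lborel P"
    and "(\<integral>y. P y \<partial>lborel) = (\<Sum>k\<le>m. real (2*m choose (2*k)) * c^(2*(m-k)) * b^(2*k) * GM k)"
proof -
  have P: "P = (\<lambda>y. \<Sum>j\<le>2*m. (real (2*m choose j) * b^j * c^(2*m-j)) * (std_normal_density y * y^j))"
  proof
    fix y
    have "(c + b*y)^(2*m) = (b*y + c)^(2*m)" by (simp add: add.commute)
    also have "\<dots> = (\<Sum>j\<le>2*m. real (2*m choose j) * (b*y)^j * c^(2*m-j))"
      by (rule binomial_ring)
    finally show "P y = (\<Sum>j\<le>2*m. (real (2*m choose j) * b^j * c^(2*m-j)) * (std_normal_density y * y^j))"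
      unfolding P_def by (simp add: sum_distrib_left power_mult_distrib mult_ac)
  qed
  show "integrable lborel P"
    unfolding P by (simp add: integrable_std_normal_moment)
  have "(\<integral>y. P y \<partial>lborel) = (\<Sum>j\<le>2*m. (real (2*m choose j) * b^j * c^(2*m-j)) *
            (\<integral>y. std_normal_density y * y^j \<partial>lborel))"
    unfolding P
    by (subst Bochner_Integration.integral_sum[where I="{..2*m}" and M=lborel and f="\<lambda>j y. (real (2*m choose j) * b^j * c^(2*m-j)) * (std_normal_density y * y^j)"])
       (auto simp: integrable_std_normal_moment)
  also have "\<dots> = (\<Sum>k\<le>m. real (2*m choose (2*k)) * c^(2*(m-k)) * b^(2*k) * GM k)"
    apply (subst sum_even_odd)
    apply (simp only: integral_std_normal_moment_even integral_std_normal_moment_odd)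
    apply (simp add: GM_def)
    apply (intro sum.cong refl)
    apply (simp add: diff_mult_distrib2 diff_mult_distrib mult_ac)
    done
  finally show "(\<integral>y. P y \<partial>lborel) = (\<Sum>k\<le>m. real (2*m choose (2*k)) * c^(2*(m-k)) * b^(2*k) * GM k)" .
qed

lemma even_pow_nonneg: "0 \<le> (x::real) ^ (2*m)"
  by (simp add: power_mult)

lemma BG_poly:
  assumes "0 \<le> \<theta>" "\<theta> \<le> 1"
  shows "(\<integral>\<^sup>+ y. ennreal ((c + b*y)^(2*m)) \<partial>BG \<theta>)
        \<le> ennreal (\<Sum>k\<le>m. real (2*m choose (2*k)) * c^(2*(m-k)) * b^(2*k) * GM k)"
proof -
  define E where "E = (\<Sum>k\<le>m. real (2*m choose (2*k)) * c^(2*(m-k)) * b^(2*k) * GM k)"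
  have nn: "0 \<le> real (2*m choose (2*k)) * c^(2*(m-k)) * b^(2*k) * GM k" for k
    using GM_pos[of k] by (intro mult_nonneg_nonneg even_pow_nonneg) auto
  have cE: "c^(2*m) \<le> E"
  proof -
    have "c^(2*m) = real (2*m choose (2*0)) * c^(2*(m-0)) * b^(2*0) * GM 0"
      by (simp add: GM_def)
    also have "\<dots> \<le> E" unfolding E_def
      by (rule member_le_sum[of 0 "{..m}"]) (use nn in auto)
    finally show ?thesis .
  qed
  have E0: "0 \<le> E" using cE even_pow_nonneg[of c m] by linarith
  have "(\<integral>\<^sup>+ x. ennreal (std_normal_density x) * ennreal ((c + b*x)^(2*m)) \<partial>lborel)
      = (\<integral>\<^sup>+ x. ennreal (std_normal_density x * (c + b*x)^(2*m)) \<partial>lborel)"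
    by (intro nn_integral_cong) (simp add: ennreal_mult even_pow_nonneg)
  also have "\<dots> = ennreal E"
    unfolding E_def
    by (subst nn_integral_eq_integral)
       (auto simp: gauss_poly[of c b m] even_pow_nonneg intro!: mult_nonneg_nonneg)
  finally have I: "(\<integral>\<^sup>+ x. ennreal (std_normal_density x) * ennreal ((c + b*x)^(2*m)) \<partial>lborel) = ennreal E" .
  have "(\<integral>\<^sup>+ y. ennreal ((c + b*y)^(2*m)) \<partial>BG \<theta>) = ennreal \<theta> * ennreal E + ennreal (1-\<theta>) * ennreal (c^(2*m))"
    using assms by (subst nn_integral_BG) (auto simp: I)
  also have "\<dots> = ennreal (\<theta> * E + (1-\<theta>) * c^(2*m))"
    using assms E0 by (simp add: ennreal_mult ennreal_plus[symmetric] even_pow_nonneg)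
  also have "\<dots> \<le> ennreal E"
  proof (rule ennreal_leI)
    have "(1-\<theta>) * c^(2*m) \<le> (1-\<theta>) * E" using assms cE by (intro mult_left_mono) auto
    then show "\<theta> * E + (1-\<theta>) * c^(2*m) \<le> E" by (simp add: algebra_simps)
  qed
  finally show ?thesis unfolding E_def .
qed

lemma two_pow_fact_ge: "j \<ge> 1 \<Longrightarrow> (2::real) \<le> 2^j * fact j"
proof -
  assume "j \<ge> 1"
  then have "(2::real) \<le> 2^j" using power_increasing[of 1 j "2::real"] by simp
  moreover have "(1::real) \<le> fact j" by simp
  ultimately show ?thesis using mult_mono[of 2 "2^j" 1 "fact j :: real"] by simp
qed

lemma odd_fact_ineq: "j \<ge> 1 \<Longrightarrow> 2 * (2^j * fact j) \<le> (fact (2*j+1) :: real)"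
proof (induction j rule: dec_induct)
  case base then show ?case by (simp add: eval_nat_numeral)
next
  case (step j)
  have "2 * (2^Suc j * fact (Suc j)) = (2 * (real j+1)) * (2 * (2^j * fact j) :: real)"
    by (simp add: algebra_simps)
  also have "\<dots> \<le> (2 * (real j+1)) * fact (2*j+1)"
    using step.IH by (intro mult_left_mono) auto
  also have "\<dots> \<le> (2*real j+3) * ((2 * (real j+1)) * fact (2*j+1))"
    by (simp add: algebra_simps)
  also have "\<dots> = fact (2 * Suc j + 1)"
    by (simp add: algebra_simps fact_Suc)
  finally show ?case .
qed

lemma gauss_abs_moment:
  assumes "m \<ge> 2"
  shows "(\<integral>y. std_normal_density y * \<bar>y\<bar>^m \<partial>lborel) \<le> fact m / 2"
proof (cases "even m")
  case True
  then obtain j where j: "m = 2*j" by auto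
  with assms have j1: "j \<ge> 1" by simp
  have "(\<integral>y. std_normal_density y * \<bar>y\<bar>^m \<partial>lborel) = (\<integral>y. std_normal_density y * y^(2*j) \<partial>lborel)"
    unfolding j by (simp add: power_even_abs)
  also have "\<dots> = fact (2*j) / (2^j * fact j)" by (rule integral_std_normal_moment_even)
  also have "\<dots> \<le> fact (2*j) / 2"
    using two_pow_fact_ge[OF j1] by (intro divide_left_mono) auto
  finally show ?thesis unfolding j .
next
  case False
  then obtain j where j: "m = 2*j+1" using oddE by blast
  with assms have j1: "j \<ge> 1" by simp
  have "(\<integral>y. std_normal_density y * \<bar>y\<bar>^m \<partial>lborel) = sqrt (2/pi) * 2^j * fact j"
    unfolding j by (rule integral_std_normal_moment_abs_odd)
  also have "\<dots> \<le> 1 * (2^j * fact j)"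
  proof -
    have "2/pi \<le> 1" using pi_gt3 by simp
    then have "sqrt (2/pi) \<le> 1" by simp
    then show ?thesis by (simp add: mult.assoc mult_right_mono)
  qed
  also have "\<dots> \<le> fact (2*j+1) / 2" using odd_fact_ineq[OF j1] by simp
  finally show ?thesis unfolding j .
qed

lemma BG_abs:
  assumes "0 \<le> \<theta>" "\<theta> \<le> 1" "m \<ge> 2"
  shows "(\<integral>\<^sup>+ y. ennreal (\<bar>y\<bar>^m) \<partial>BG \<theta>) \<le> ennreal (fact m / 2)"
proof -
  define A where "A = (\<integral>y. std_normal_density y * \<bar>y\<bar>^m \<partial>lborel)"
  have A0: "0 \<le> A" unfolding A_def by (intro integral_nonneg_AE) auto
  have I: "(\<integral>\<^sup>+ x. ennreal (std_normal_density x) * ennreal (\<bar>x\<bar>^m) \<partial>lborel) = ennreal A"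
  proof -
    have "(\<integral>\<^sup>+ x. ennreal (std_normal_density x) * ennreal (\<bar>x\<bar>^m) \<partial>lborel)
      = (\<integral>\<^sup>+ x. ennreal (std_normal_density x * \<bar>x\<bar>^m) \<partial>lborel)"
      by (intro nn_integral_cong) (simp add: ennreal_mult)
    also have "\<dots> = ennreal A"
      unfolding A_def
      by (subst nn_integral_eq_integral) (auto simp: integrable_std_normal_moment_abs)
    finally show ?thesis .
  qed
  have "(\<integral>\<^sup>+ y. ennreal (\<bar>y\<bar>^m) \<partial>BG \<theta>) = ennreal \<theta> * ennreal A"
    using assms by (subst nn_integral_BG) (auto simp: I)
  also have "\<dots> = ennreal (\<theta> * A)" using assms A0 by (simp add: ennreal_mult)
  also have "\<dots> \<le> ennreal (fact m / 2)"
  proof (rule ennreal_leI)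
    have "\<theta> * A \<le> 1 * A" using assms A0 by (intro mult_right_mono) auto
    also have "\<dots> \<le> fact m / 2" using gauss_abs_moment[OF assms(3)] by (simp add: A_def)
    finally show "\<theta> * A \<le> fact m / 2" .
  qed
  finally show ?thesis .
qed




lemma GM_binom:
  assumes "k \<le> m"
  shows "real (2*m choose (2*k)) * GM k * GM (m-k) = GM m * real (m choose k)"
proof -
  have a: "2*m - 2*k = 2*(m-k)" by simp
  have p: "(2::real)^k * 2^(m-k) = 2^m" using assms by (simp add: power_add[symmetric])
  have "real (2*m choose (2*k)) = fact (2*m) / (fact (2*k) * fact (2*(m-k)))"
    using assms by (subst binomial_fact) (auto simp: a)
  moreover have "real (m choose k) = fact m / (fact k * fact (m-k))"
    using assms by (rule binomial_fact)
  ultimately show ?thesis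
    unfolding GM_def using p
    by (simp add: field_simps)
qed

lemma BG_prod_sigma: "0 \<le> \<theta> \<Longrightarrow> \<theta> \<le> 1 \<Longrightarrow> product_prob_space (\<lambda>_. BG \<theta>)"
  unfolding product_prob_space_def product_prob_space_axioms_def product_sigma_finite_def
  using prob_space_BG by (auto simp: prob_space_imp_sigma_finite)

lemma lin_moment:
  fixes a :: "'i \<Rightarrow> real"
  assumes th: "0 \<le> \<theta>" "\<theta> \<le> 1" and I: "finite I"
  shows "(\<integral>\<^sup>+ x. ennreal ((\<Sum>c\<in>I. a c * x c)^(2*m)) \<partial>PiM I (\<lambda>_. BG \<theta>))
          \<le> ennreal ((\<Sum>c\<in>I. (a c)\<^sup>2)^m * GM m)"
  using I
proof (induction I arbitrary: m rule: finite_induct)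
  case empty
  interpret P: prob_space "PiM {} (\<lambda>_. BG \<theta>)"
    by (rule prob_space_PiM) (use prob_space_BG[OF th] in auto)
  show ?case
    by (cases m) (auto simp: GM_def P.emeasure_space_1)
next
  case (insert i I)
  interpret PP: product_prob_space "\<lambda>_. BG \<theta>" by (rule BG_prod_sigma[OF th])
  define L where "L x = (\<Sum>c\<in>I. a c * x c)" for x :: "'i \<Rightarrow> real"
  define A where "A = (\<Sum>c\<in>I. (a c)\<^sup>2)"
  define co where "co k = real (2*m choose (2*k)) * (a i)^(2*k) * GM k" for k
  have co0: "0 \<le> co k" for k unfolding co_def using GM_pos[of k]
    by (intro mult_nonneg_nonneg even_pow_nonneg) auto
  have A0: "0 \<le> A" unfolding A_def by (intro sum_nonneg) auto
  have [measurable]: "L \<in> borel_measurable (PiM I (\<lambda>_. BG \<theta>))"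
    unfolding L_def by measurable
  have "(\<integral>\<^sup>+ x. ennreal ((\<Sum>c\<in>insert i I. a c * x c)^(2*m)) \<partial>PiM (insert i I) (\<lambda>_. BG \<theta>))
      = (\<integral>\<^sup>+ x. (\<integral>\<^sup>+ y. ennreal ((\<Sum>c\<in>insert i I. a c * (x(i:=y)) c)^(2*m)) \<partial>BG \<theta>) \<partial>PiM I (\<lambda>_. BG \<theta>))"
    by (rule PP.product_nn_integral_insert) (use insert in \<open>auto\<close>, measurable)
  also have "\<dots> = (\<integral>\<^sup>+ x. (\<integral>\<^sup>+ y. ennreal ((L x + a i * y)^(2*m)) \<partial>BG \<theta>) \<partial>PiM I (\<lambda>_. BG \<theta>))"
  proof -
    have "(\<Sum>c\<in>insert i I. a c * (x(i:=y)) c) = L x + a i * y" for x y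
    proof -
      have "(\<Sum>c\<in>I. a c * (x(i:=y)) c) = L x"
        unfolding L_def using insert(2) by (intro sum.cong) auto
      then show ?thesis using insert by (simp add: add.commute)
    qed
    then show ?thesis by simp
  qed
  also have "\<dots> \<le> (\<integral>\<^sup>+ x. ennreal (\<Sum>k\<le>m. co k * (L x)^(2*(m-k))) \<partial>PiM I (\<lambda>_. BG \<theta>))"
  proof (rule nn_integral_mono)
    fix x
    show "(\<integral>\<^sup>+ y. ennreal ((L x + a i * y)^(2*m)) \<partial>BG \<theta>) \<le> ennreal (\<Sum>k\<le>m. co k * (L x)^(2*(m-k)))"
      using BG_poly[OF th, of "L x" "a i" m] unfolding co_def by (simp add: mult_ac)
  qed
  also have "\<dots> = (\<Sum>k\<le>m. ennreal (co k) * (\<integral>\<^sup>+ x. ennreal ((L x)^(2*(m-k))) \<partial>PiM I (\<lambda>_. BG \<theta>)))"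
  proof -
    have "(\<integral>\<^sup>+ x. ennreal (\<Sum>k\<le>m. co k * (L x)^(2*(m-k))) \<partial>PiM I (\<lambda>_. BG \<theta>))
        = (\<integral>\<^sup>+ x. (\<Sum>k\<le>m. ennreal (co k) * ennreal ((L x)^(2*(m-k)))) \<partial>PiM I (\<lambda>_. BG \<theta>))"
      using co0 by (intro nn_integral_cong) (simp add: ennreal_mult even_pow_nonneg sum_nonneg
            flip: sum_ennreal)
    also have "\<dots> = (\<Sum>k\<le>m. ennreal (co k) * (\<integral>\<^sup>+ x. ennreal ((L x)^(2*(m-k))) \<partial>PiM I (\<lambda>_. BG \<theta>)))"
      by (subst nn_integral_sum) (auto simp: nn_integral_cmult)
    finally show ?thesis .
  qed
  also have "\<dots> \<le> (\<Sum>k\<le>m. ennreal (co k) * ennreal (A^(m-k) * GM (m-k)))"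
    by (intro sum_mono mult_left_mono) (auto simp: L_def A_def insert.IH)
  also have "\<dots> = ennreal (\<Sum>k\<le>m. co k * (A^(m-k) * GM (m-k)))"
  proof -
    have nn: "0 \<le> co k * (A^(m-k) * GM (m-k))" for k
      using co0 A0 GM_pos[of "m-k"] by (intro mult_nonneg_nonneg) auto
    have "(\<Sum>k\<le>m. ennreal (co k) * ennreal (A^(m-k) * GM (m-k))) = (\<Sum>k\<le>m. ennreal (co k * (A^(m-k) * GM (m-k))))"
      using co0 A0 GM_pos by (intro sum.cong refl) (simp add: ennreal_mult less_imp_le)
    also have "\<dots> = ennreal (\<Sum>k\<le>m. co k * (A^(m-k) * GM (m-k)))"
      using nn by (rule sum_ennreal)
    finally show ?thesis .
  qed
  also have "(\<Sum>k\<le>m. co k * (A^(m-k) * GM (m-k))) = GM m * (\<Sum>k\<le>m. real (m choose k) * ((a i)\<^sup>2)^k * A^(m-k))"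
  proof -
    have "co k * (A^(m-k) * GM (m-k)) = GM m * (real (m choose k) * ((a i)\<^sup>2)^k * A^(m-k))" if "k \<le> m" for k
    proof -
      have "co k * (A^(m-k) * GM (m-k)) = (real (2*m choose (2*k)) * GM k * GM (m-k)) * ((a i)^(2*k) * A^(m-k))"
        unfolding co_def by (simp add: mult_ac)
      also have "\<dots> = GM m * (real (m choose k) * ((a i)\<^sup>2)^k * A^(m-k))"
        using GM_binom[OF that] by (simp add: power_mult mult_ac flip: power_mult_distrib power_mult)
      finally show ?thesis .
    qed
    then show ?thesis unfolding sum_distrib_left by (intro sum.cong) auto
  qed
  also have "\<dots> = GM m * ((a i)\<^sup>2 + A)^m"
    by (simp add: binomial_ring)
  also have "\<dots> = (\<Sum>c\<in>insert i I. (a c)\<^sup>2)^m * GM m"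
    using insert by (simp add: A_def mult.commute)
  finally show ?case .
qed




lemma exp_tail_sums:
  fixes y :: real
  shows "(\<lambda>n. y^(n+2) / fact (n+2)) sums (exp y - 1 - y)"
proof -
  have "(\<lambda>n. y^n / fact n) sums exp y"
    using exp_converges[of y] by (simp add: divide_inverse mult.commute)
  then have "(\<lambda>n. y^(n+2) / fact (n+2)) sums (exp y - (\<Sum>n<2. y^n / fact n))"
    using sums_iff_shift'[of "\<lambda>n. y^n / fact n" 2 "exp y"] by simp
  moreover have "exp y - (\<Sum>n<2. y^n / fact n) = exp y - 1 - y" by (simp add: eval_nat_numeral)
  ultimately show ?thesis by simp
qed

lemma exp_le_abs_tail: "exp (z::real) - 1 - z \<le> exp \<bar>z\<bar> - 1 - \<bar>z\<bar>"
proof (rule sums_le[OF _ exp_tail_sums exp_tail_sums])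
  fix n
  have "z^(n+2) \<le> \<bar>z\<bar>^(n+2)" by (metis power_abs abs_ge_self)
  then show "z^(n+2) / fact (n+2) \<le> \<bar>z\<bar>^(n+2) / fact (n+2)"
    by (intro divide_right_mono) auto
qed

context prob_space
begin

lemma integrable_of_mom2:
  fixes X :: "'a \<Rightarrow> real"
  assumes [measurable]: "X \<in> borel_measurable M"
    and mom2: "(\<integral>\<^sup>+ x. ennreal (\<bar>X x\<bar>^2) \<partial>M) \<le> ennreal V"
  shows "integrable M X"
proof (rule integrableI_bounded)
  show "X \<in> borel_measurable M" by simp
  have "(\<integral>\<^sup>+ x. ennreal (norm (X x)) \<partial>M) \<le> (\<integral>\<^sup>+ x. ennreal 1 + ennreal (\<bar>X x\<bar>^2) \<partial>M)"
  proof (rule nn_integral_mono)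
    fix x
    have "\<bar>X x\<bar> \<le> 1 + \<bar>X x\<bar>^2"
    proof (cases "\<bar>X x\<bar> \<le> 1")
      case True then show ?thesis by (simp add: add_increasing2)
    next
      case False
      then have "\<bar>X x\<bar> * 1 \<le> \<bar>X x\<bar> * \<bar>X x\<bar>" by (intro mult_left_mono) auto
      then show ?thesis by (simp add: power2_eq_square)
    qed
    then show "ennreal (norm (X x)) \<le> ennreal 1 + ennreal (\<bar>X x\<bar>^2)"
      by (simp add: ennreal_plus[symmetric] del: ennreal_1 ennreal_plus)
  qed
  also have "\<dots> = 1 + (\<integral>\<^sup>+ x. ennreal (\<bar>X x\<bar>^2) \<partial>M)"
    by (subst nn_integral_add) (auto simp: emeasure_space_1)
  also have "\<dots> \<le> 1 + ennreal V" using mom2 by (intro add_left_mono)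
  also have "\<dots> < \<infinity>" by simp
  finally show "(\<integral>\<^sup>+ x. ennreal (norm (X x)) \<partial>M) < \<infinity>" .
qed

lemma mgf_bound:
  fixes X :: "'a \<Rightarrow> real"
  assumes Xm[measurable]: "X \<in> borel_measurable M"
    and V: "0 \<le> V" and R: "0 < R"
    and mom: "\<And>m. m \<ge> 2 \<Longrightarrow> (\<integral>\<^sup>+ x. ennreal (\<bar>X x\<bar>^m) \<partial>M) \<le> ennreal (fact m / 2 * V * R^(m-2))"
    and l: "0 < l" "l * R < 1"
  shows "(\<integral>\<^sup>+ x. ennreal (exp (l * (X x - expectation X))) \<partial>M) \<le> ennreal (exp (V * l\<^sup>2 / (2 * (1 - l*R))))"
proof -
  define c where "c = V * l\<^sup>2 / (2 * (1 - l*R))"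
  define \<psi> where "\<psi> x = exp (l * \<bar>X x\<bar>) - 1 - l * \<bar>X x\<bar>" for x
  define e where "e = expectation X"
  have c0: "0 \<le> c" unfolding c_def using V l by (intro divide_nonneg_pos mult_nonneg_nonneg) auto
  have intX: "integrable M X"
    by (rule integrable_of_mom2[OF Xm, of "V"]) (use mom[of 2] in simp)
  have psi0: "0 \<le> \<psi> x" for x
    unfolding \<psi>_def using exp_ge_add_one_self[of "l * \<bar>X x\<bar>"] by linarith
  have [measurable]: "\<psi> \<in> borel_measurable M" unfolding \<psi>_def by measurable
  have psi_sums: "(\<lambda>n. (l * \<bar>X x\<bar>)^(n+2) / fact (n+2)) sums \<psi> x" for x
    unfolding \<psi>_def by (rule exp_tail_sums)
  have trm: "(\<integral>\<^sup>+ x. ennreal ((l * \<bar>X x\<bar>)^(n+2) / fact (n+2)) \<partial>M) \<le> ennreal (V * l\<^sup>2 / 2 * (l*R)^n)" for n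
  proof -
    have "(\<integral>\<^sup>+ x. ennreal ((l * \<bar>X x\<bar>)^(n+2) / fact (n+2)) \<partial>M)
        = (\<integral>\<^sup>+ x. ennreal (l^(n+2) / fact (n+2)) * ennreal (\<bar>X x\<bar>^(n+2)) \<partial>M)"
      using l by (intro nn_integral_cong) (simp add: ennreal_mult[symmetric] power_mult_distrib)
    also have "\<dots> = ennreal (l^(n+2) / fact (n+2)) * (\<integral>\<^sup>+ x. ennreal (\<bar>X x\<bar>^(n+2)) \<partial>M)"
      by (rule nn_integral_cmult) measurable
    also have "\<dots> \<le> ennreal (l^(n+2) / fact (n+2)) * ennreal (fact (n+2) / 2 * V * R^n)"
      using mom[of "n+2"] by (intro mult_left_mono) auto
    also have "\<dots> = ennreal (V * l\<^sup>2 / 2 * (l*R)^n)"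
    proof -
      have g: "l^(n+2) / F * (F / 2 * V * R^n) = V * l\<^sup>2 / 2 * (l*R)^n" if "F \<noteq> 0" for F :: real
        using that by (simp add: field_simps power_mult_distrib power_add power2_eq_square)
      have "ennreal (l^(n+2) / fact (n+2)) * ennreal (fact (n+2) / 2 * V * R^n)
          = ennreal (l^(n+2) / fact (n+2) * (fact (n+2) / 2 * V * R^n))"
        using l V R by (subst ennreal_mult) auto
      also have "\<dots> = ennreal (V * l\<^sup>2 / 2 * (l*R)^n)"
        by (subst g) auto
      finally show ?thesis .
    qed
    finally show ?thesis .
  qed
  have geo: "(\<lambda>n. V * l\<^sup>2 / 2 * (l*R)^n) sums (V * l\<^sup>2 / 2 * (1 / (1 - l*R)))"
    using l R by (intro sums_mult geometric_sums) (auto simp: abs_mult)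
  have Ipsi: "(\<integral>\<^sup>+ x. ennreal (\<psi> x) \<partial>M) \<le> ennreal c"
  proof -
    have "(\<integral>\<^sup>+ x. ennreal (\<psi> x) \<partial>M) = (\<integral>\<^sup>+ x. (\<Sum>n. ennreal ((l * \<bar>X x\<bar>)^(n+2) / fact (n+2))) \<partial>M)"
      using l by (intro nn_integral_cong suminf_ennreal_eq[symmetric] psi_sums) auto
    also have "\<dots> = (\<Sum>n. (\<integral>\<^sup>+ x. ennreal ((l * \<bar>X x\<bar>)^(n+2) / fact (n+2)) \<partial>M))"
      by (rule nn_integral_suminf) measurable
    also have "\<dots> \<le> (\<Sum>n. ennreal (V * l\<^sup>2 / 2 * (l*R)^n))"
      by (intro suminf_le trm) auto
    also have "\<dots> = ennreal (V * l\<^sup>2 / 2 * (1 / (1 - l*R)))"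
      using l R V by (intro suminf_ennreal_eq geo) auto
    also have "V * l\<^sup>2 / 2 * (1 / (1 - l*R)) = c" unfolding c_def by simp
    finally show ?thesis .
  qed
  have intpsi: "integrable M \<psi>"
  proof (rule integrableI_bounded)
    show "(\<integral>\<^sup>+ x. ennreal (norm (\<psi> x)) \<partial>M) < \<infinity>"
      using Ipsi psi0 by (simp add: abs_of_nonneg order.strict_trans1)
  qed simp
  have Epsi: "expectation \<psi> \<le> c"
  proof -
    have "ennreal (expectation \<psi>) = (\<integral>\<^sup>+ x. ennreal (\<psi> x) \<partial>M)"
      using intpsi psi0 by (subst nn_integral_eq_integral) auto
    then have "ennreal (expectation \<psi>) \<le> ennreal c" using Ipsi by simp
    then show ?thesis using c0 by (simp add: ennreal_le_iff)
  qed
  define B where "B x = exp (-l*e) * (1 + l * X x + \<psi> x)" for x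
  have ptw: "exp (l * (X x - e)) \<le> B x" for x
  proof -
    have "exp (l * X x) - 1 - l * X x \<le> \<psi> x"
      unfolding \<psi>_def using exp_le_abs_tail[of "l * X x"] l by (simp add: abs_mult)
    then have "exp (l * X x) \<le> 1 + l * X x + \<psi> x" by simp
    then have "exp (-l*e) * exp (l * X x) \<le> B x" unfolding B_def by (intro mult_left_mono) auto
    then show ?thesis by (simp add: B_def exp_add[symmetric] algebra_simps)
  qed
  have B0: "0 \<le> B x" for x using ptw[of x] exp_gt_zero[of "l * (X x - e)"] by linarith
  have intB: "integrable M B" unfolding B_def using intX intpsi by auto
  have "(\<integral>\<^sup>+ x. ennreal (exp (l * (X x - expectation X))) \<partial>M) \<le> (\<integral>\<^sup>+ x. ennreal (B x) \<partial>M)"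
    unfolding e_def[symmetric] by (intro nn_integral_mono ennreal_leI ptw)
  also have "\<dots> = ennreal (expectation B)"
    using intB B0 by (subst nn_integral_eq_integral) auto
  also have "expectation B = exp (-l*e) * (1 + l * e + expectation \<psi>)"
    unfolding B_def e_def using intX intpsi by (simp add: prob_space)
  also have "\<dots> \<le> exp (-l*e) * exp (l * e + c)"
  proof (intro mult_left_mono)
    have "1 + l * e + expectation \<psi> \<le> 1 + (l * e + c)" using Epsi by simp
    also have "\<dots> \<le> exp (l * e + c)" by (rule exp_ge_add_one_self)
    finally show "1 + l * e + expectation \<psi> \<le> exp (l * e + c)" .
  qed simp
  also have "exp (-l*e) * exp (l * e + c) = exp c" by (simp add: exp_add[symmetric])
  finally show ?thesis unfolding c_def by (simp add: ennreal_leI)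
qed

lemma bernstein_ge:
  fixes X :: "'i \<Rightarrow> 'a \<Rightarrow> real"
  assumes I: "finite I" and ind: "indep_vars (\<lambda>_. borel) X I"
    and V: "0 < V" and R: "0 < R" and s: "0 < s"
    and mom: "\<And>i m. i \<in> I \<Longrightarrow> m \<ge> 2 \<Longrightarrow>
                (\<integral>\<^sup>+ x. ennreal (\<bar>X i x\<bar>^m) \<partial>M) \<le> ennreal (fact m / 2 * V * R^(m-2))"
  shows "prob {x \<in> space M. real (card I) * s \<le> (\<Sum>i\<in>I. X i x - expectation (X i))}
          \<le> exp (- (real (card I) * s\<^sup>2 / (2*V + 2*R * s)))"
proof -
  define l where "l = s / (V + R * s)"
  have l: "0 < l" using V R s unfolding l_def by (intro divide_pos_pos add_pos_pos mult_pos_pos)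
  have pos: "0 < V + R * s" using V R s by (intro add_pos_pos mult_pos_pos)
  have lR: "l * R < 1" using V pos by (simp add: l_def field_simps)
  have Xm[measurable]: "\<And>i. i \<in> I \<Longrightarrow> X i \<in> borel_measurable M"
    using ind unfolding indep_vars_def by auto
  define \<mu>' where "\<mu>' i = expectation (X i)" for i
  define S where "S x = (\<Sum>i\<in>I. X i x - \<mu>' i)" for x
  have [measurable]: "S \<in> borel_measurable M" unfolding S_def by measurable
  have "ennreal (prob {x \<in> space M. real (card I) * s \<le> S x}) = emeasure M {x \<in> space M. real (card I) * s \<le> S x}"
    by (simp add: emeasure_eq_measure)
  also have "\<dots> \<le> ennreal (exp (-l * (real (card I) * s))) * (\<integral>\<^sup>+x. ennreal (exp (l * S x)) * indicator (space M) x \<partial>M)"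
    by (intro Chernoff_ineq_nn_integral_ge l) auto
  also have "(\<integral>\<^sup>+x. ennreal (exp (l * S x)) * indicator (space M) x \<partial>M)
      = (\<integral>\<^sup>+x. (\<Prod>i\<in>I. ennreal (exp (l * (X i x - \<mu>' i)))) \<partial>M)"
    by (intro nn_integral_cong)
       (simp_all add: S_def sum_distrib_left exp_sum I prod_ennreal)
  also have "\<dots> = (\<Prod>i\<in>I. \<integral>\<^sup>+x. ennreal (exp (l * (X i x - \<mu>' i))) \<partial>M)"
    by (intro indep_vars_nn_integral I indep_vars_compose2[OF ind]) auto
  also have "ennreal (exp (-l * (real (card I) * s))) * \<dots> \<le>
      ennreal (exp (-l * (real (card I) * s))) * (\<Prod>i\<in>I. ennreal (exp (V * l\<^sup>2 / (2 * (1 - l*R)))))"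
  proof (intro mult_left_mono prod_mono_ennreal)
    fix i assume i: "i \<in> I"
    show "(\<integral>\<^sup>+x. ennreal (exp (l * (X i x - \<mu>' i))) \<partial>M) \<le> ennreal (exp (V * l\<^sup>2 / (2 * (1 - l*R))))"
      unfolding \<mu>'_def using V R l lR mom[OF i]
      by (intro mgf_bound Xm[OF i]) auto
  qed auto
  also have "\<dots> = ennreal (exp (-l * (real (card I) * s)) * exp (V * l\<^sup>2 / (2 * (1 - l*R))) ^ card I)"
    by (simp add: prod_ennreal ennreal_mult ennreal_power)
  also have "exp (-l * (real (card I) * s)) * exp (V * l\<^sup>2 / (2 * (1 - l*R))) ^ card I
      = exp (real (card I) * (V * l\<^sup>2 / (2 * (1 - l*R)) - l * s))"
    by (simp add: exp_of_nat_mult[symmetric] exp_add[symmetric] algebra_simps)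
  also have "V * l\<^sup>2 / (2 * (1 - l*R)) - l * s = - (s\<^sup>2 / (2*V + 2*R * s))"
  proof -
    have gen: "V * (s/D)\<^sup>2 / (2 * (1 - (s/D)*R)) - (s/D) * s = - (s\<^sup>2 / (2*V + 2*(R * s)))"
      if D: "D = V + R * s" "0 < D" for D
    proof -
      have e1: "1 - (s/D)*R = V / D" using D by (simp add: field_simps)
      have e2: "V * (s/D)\<^sup>2 / (2 * (V / D)) = s\<^sup>2 / (2 * D)"
        using V D(2) by (simp add: field_simps power2_eq_square)
      have e3: "2*V + 2*(R * s) = 2 * D" using D(1) by simp
      have e4: "s\<^sup>2 / (2 * D) - (s/D) * s = - (s\<^sup>2 / (2 * D))"
        using D(2) by (simp add: field_simps power2_eq_square)
      show ?thesis unfolding e1 e2 e3 e4 ..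
    qed
    show ?thesis unfolding l_def using gen[OF refl pos] by simp
  qed
  finally have "ennreal (prob {x \<in> space M. real (card I) * s \<le> S x})
      \<le> ennreal (exp (- (real (card I) * s\<^sup>2 / (2*V + 2*R * s))))" by simp
  then show ?thesis
    unfolding S_def \<mu>'_def by (simp add: ennreal_le_iff)
qed

lemma bernstein_abs:
  fixes X :: "'i \<Rightarrow> 'a \<Rightarrow> real"
  assumes I: "finite I" and ind: "indep_vars (\<lambda>_. borel) X I"
    and V: "0 < V" and R: "0 < R" and s: "0 < s"
    and mom: "\<And>i m. i \<in> I \<Longrightarrow> m \<ge> 2 \<Longrightarrow>
                (\<integral>\<^sup>+ x. ennreal (\<bar>X i x\<bar>^m) \<partial>M) \<le> ennreal (fact m / 2 * V * R^(m-2))"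
  shows "prob {x \<in> space M. real (card I) * s \<le> \<bar>\<Sum>i\<in>I. X i x - expectation (X i)\<bar>}
          \<le> 2 * exp (- (real (card I) * s\<^sup>2 / (2*V + 2*R * s)))"
proof -
  have Xm[measurable]: "\<And>i. i \<in> I \<Longrightarrow> X i \<in> borel_measurable M"
    using ind unfolding indep_vars_def by auto
  define A where "A = {x \<in> space M. real (card I) * s \<le> (\<Sum>i\<in>I. X i x - expectation (X i))}"
  define B where "B = {x \<in> space M. real (card I) * s \<le> (\<Sum>i\<in>I. (\<lambda>i x. - X i x) i x - expectation ((\<lambda>i x. - X i x) i))}"
  have indm: "indep_vars (\<lambda>_. borel) (\<lambda>i x. - X i x) I"
    by (rule indep_vars_compose2[OF ind]) auto
  have [measurable]: "A \<in> sets M" "B \<in> sets M" unfolding A_def B_def by measurable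
  have "{x \<in> space M. real (card I) * s \<le> \<bar>\<Sum>i\<in>I. X i x - expectation (X i)\<bar>} \<subseteq> A \<union> B"
    unfolding A_def B_def by (auto simp: sum_negf[symmetric] abs_if split: if_splits)
  then have "prob {x \<in> space M. real (card I) * s \<le> \<bar>\<Sum>i\<in>I. X i x - expectation (X i)\<bar>} \<le> prob (A \<union> B)"
    by (intro finite_measure_mono) auto
  also have "\<dots> \<le> prob A + prob B" by (intro measure_Un_le) auto
  also have "prob A \<le> exp (- (real (card I) * s\<^sup>2 / (2*V + 2*R * s)))"
    unfolding A_def by (rule bernstein_ge[OF I ind V R s mom])
  also have "prob B \<le> exp (- (real (card I) * s\<^sup>2 / (2*V + 2*R * s)))"
    unfolding B_def by (rule bernstein_ge[OF I indm V R s]) (use mom in auto)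
  finally show ?thesis by simp
qed

end




lemma tanh_borel: "(tanh :: real \<Rightarrow> real) \<in> borel_measurable borel"
proof (rule borel_measurable_continuous_onI)
  have "\<And>x::real. cosh x \<noteq> 0" by (metis cosh_real_pos less_irrefl)
  then show "continuous_on UNIV (tanh :: real \<Rightarrow> real)"
    using continuous_on_tanh[of UNIV "\<lambda>x::real. x"] by (simp add: continuous_on_id)
qed

lemma tanh_measurable[measurable]: "f \<in> borel_measurable M \<Longrightarrow> (\<lambda>x. tanh (f x :: real)) \<in> borel_measurable M"
  using measurable_compose[OF _ tanh_borel] by blast

lemma indep_coords:
  assumes th: "0 \<le> \<theta>" "\<theta> \<le> 1" and K: "finite K" "K \<noteq> {}"
  shows "prob_space.indep_vars (PiM K (\<lambda>_. BG \<theta>)) (\<lambda>_. BG \<theta>) (\<lambda>c x. x c) K"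
proof -
  interpret PP: product_prob_space "\<lambda>_. BG \<theta>" K by (rule BG_prod_sigma[OF th])
  have PS: "prob_space (PiM K (\<lambda>_. BG \<theta>))" by (rule prob_space_PiM) (use prob_space_BG[OF th] in auto)
  show ?thesis
  proof (subst prob_space.indep_vars_iff_distr_eq_PiM'[OF PS K(2)])
    show "(\<lambda>x. x c) \<in> measurable (PiM K (\<lambda>_. BG \<theta>)) (BG \<theta>)" if "c \<in> K" for c
      using that by (rule measurable_component_singleton)
    have "distr (PiM K (\<lambda>_. BG \<theta>)) (PiM K (\<lambda>_. BG \<theta>)) (\<lambda>x. \<lambda>c\<in>K. x c) = PiM K (\<lambda>_. BG \<theta>)"
      using PP.distr_restrict[of K K] K by simp
    also have "\<dots> = PiM K (\<lambda>c. distr (PiM K (\<lambda>_. BG \<theta>)) (BG \<theta>) (\<lambda>x. x c))"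
      by (intro PiM_cong refl PP.PiM_component[symmetric])
    finally show "distr (PiM K (\<lambda>_. BG \<theta>)) (PiM K (\<lambda>_. BG \<theta>)) (\<lambda>x. \<lambda>c\<in>K. x c)
        = PiM K (\<lambda>c. distr (PiM K (\<lambda>_. BG \<theta>)) (BG \<theta>) (\<lambda>x. x c))" .
  qed
qed

lemma indep_cols:
  fixes n p :: nat
  assumes th: "0 \<le> \<theta>" "\<theta> \<le> 1" and n: "n \<ge> 1" and p: "p \<ge> 1"
  shows "prob_space.indep_vars (PiM ({..<n}\<times>{..<p}) (\<lambda>_. BG \<theta>))
           (\<lambda>k. PiM ({..<n}\<times>{k}) (\<lambda>_. BG \<theta>)) (\<lambda>k x. restrict x ({..<n}\<times>{k})) {..<p}"
proof -
  interpret P: prob_space "PiM ({..<n}\<times>{..<p}) (\<lambda>_. BG \<theta>)"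
    by (rule prob_space_PiM) (use prob_space_BG[OF th] in auto)
  have "(0::nat,0::nat) \<in> {..<n}\<times>{..<p}" using n p by auto
  then have ne: "{..<n}\<times>{..<p} \<noteq> {}" by blast
  have "P.indep_vars (\<lambda>j. PiM ({..<n}\<times>{j}) (\<lambda>_. BG \<theta>)) (\<lambda>j \<omega>. restrict (\<lambda>i. \<omega> i) ({..<n}\<times>{j})) {..<p}"
    by (rule P.indep_vars_restrict[OF indep_coords[OF th _ ne]]) (auto simp: disjoint_family_on_def)
  then show ?thesis by simp
qed

lemma col_dep:
  assumes "n \<ge> 1"
  shows "aa n \<mu> w (restrict x ({..<n}\<times>{k})) k = aa n \<mu> w x k"
    and "bb n \<mu> w (restrict x ({..<n}\<times>{k})) k = bb n \<mu> w x k"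
    and "LL n w (restrict x ({..<n}\<times>{k})) k = LL n w x k"
proof -
  have z: "zz n w (restrict x ({..<n}\<times>{k})) k = zz n w x k"
    unfolding zz_def using assms by (auto intro!: sum.cong)
  show l: "LL n w (restrict x ({..<n}\<times>{k})) k = LL n w x k"
    unfolding LL_def using assms by (auto intro!: sum.cong)
  show "aa n \<mu> w (restrict x ({..<n}\<times>{k})) k = aa n \<mu> w x k"
    unfolding aa_def z l ..
  show "bb n \<mu> w (restrict x ({..<n}\<times>{k})) k = bb n \<mu> w x k"
    unfolding bb_def z using assms by simp
qed

lemma meas_col:
  assumes "n \<ge> 1" "k \<in> L"
  shows "(\<lambda>x. aa n \<mu> w x k) \<in> borel_measurable (PiM ({..<n}\<times>L) (\<lambda>_. BG \<theta>))"
    and "(\<lambda>x. bb n \<mu> w x k) \<in> borel_measurable (PiM ({..<n}\<times>L) (\<lambda>_. BG \<theta>))"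
    and "(\<lambda>x. LL n w x k) \<in> borel_measurable (PiM ({..<n}\<times>L) (\<lambda>_. BG \<theta>))"
proof -
  have c[measurable]: "(\<lambda>x. x (i,k)) \<in> borel_measurable (PiM ({..<n}\<times>L) (\<lambda>_. BG \<theta>))" if "i < n" for i
  proof -
    have "(\<lambda>x. x (i,k)) \<in> measurable (PiM ({..<n}\<times>L) (\<lambda>_. BG \<theta>)) (BG \<theta>)"
      by (rule measurable_component_singleton) (use that assms in auto)
    then show ?thesis by (simp add: measurable_cong_sets[OF refl sets_BG])
  qed
  have c2[measurable]: "(\<lambda>x. x (i,k)) \<in> borel_measurable (PiM ({..<n}\<times>L) (\<lambda>_. BG \<theta>))" if "i < n - 1" for i
    using that c by simp
  have c3[measurable]: "(\<lambda>x. x (n-1,k)) \<in> borel_measurable (PiM ({..<n}\<times>L) (\<lambda>_. BG \<theta>))"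
    using assms c by simp
  have z[measurable]: "(\<lambda>x. zz n w x k) \<in> borel_measurable (PiM ({..<n}\<times>L) (\<lambda>_. BG \<theta>))"
    unfolding zz_def by measurable
  show l[measurable]: "(\<lambda>x. LL n w x k) \<in> borel_measurable (PiM ({..<n}\<times>L) (\<lambda>_. BG \<theta>))"
    unfolding LL_def by measurable
  show "(\<lambda>x. aa n \<mu> w x k) \<in> borel_measurable (PiM ({..<n}\<times>L) (\<lambda>_. BG \<theta>))"
    unfolding aa_def by measurable
  show "(\<lambda>x. bb n \<mu> w x k) \<in> borel_measurable (PiM ({..<n}\<times>L) (\<lambda>_. BG \<theta>))"
    unfolding bb_def by measurable
qed

lemma marginal:
  assumes th: "0 \<le> \<theta>" "\<theta> \<le> 1" and K: "finite K" "J \<subseteq> K"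
    and f[measurable]: "f \<in> borel_measurable (PiM J (\<lambda>_. BG \<theta>))"
  shows "(\<integral>\<^sup>+ x. f (restrict x J) \<partial>PiM K (\<lambda>_. BG \<theta>)) = (\<integral>\<^sup>+ y. f y \<partial>PiM J (\<lambda>_. BG \<theta>))"
proof -
  interpret PP: product_prob_space "\<lambda>_. BG \<theta>" K by (rule BG_prod_sigma[OF th])
  have "(\<integral>\<^sup>+ y. f y \<partial>PiM J (\<lambda>_. BG \<theta>)) =
      (\<integral>\<^sup>+ y. f y \<partial>distr (PiM K (\<lambda>_. BG \<theta>)) (PiM J (\<lambda>_. BG \<theta>)) (\<lambda>x. restrict x J))"
    using PP.distr_restrict[OF K(2,1)] by simp
  also have "\<dots> = (\<integral>\<^sup>+ x. f (restrict x J) \<partial>PiM K (\<lambda>_. BG \<theta>))"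
    by (rule nn_integral_distr) (use K in \<open>auto intro!: measurable_restrict_subset\<close>)
  finally show ?thesis ..
qed

lemma component_mom:
  assumes th: "0 \<le> \<theta>" "\<theta> \<le> 1" and K: "c \<in> K"
    and f[measurable]: "f \<in> borel_measurable borel"
  shows "(\<integral>\<^sup>+ x. f (x c) \<partial>PiM K (\<lambda>_. BG \<theta>)) = (\<integral>\<^sup>+ y. f y \<partial>BG \<theta>)"
proof -
  interpret PP: product_prob_space "\<lambda>_. BG \<theta>" K by (rule BG_prod_sigma[OF th])
  have "(\<integral>\<^sup>+ y. f y \<partial>BG \<theta>) = (\<integral>\<^sup>+ y. f y \<partial>distr (PiM K (\<lambda>_. BG \<theta>)) (BG \<theta>) (\<lambda>x. x c))"
    using PP.PiM_component[OF K] by simp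
  also have "\<dots> = (\<integral>\<^sup>+ x. f (x c) \<partial>PiM K (\<lambda>_. BG \<theta>))"
    by (rule nn_integral_distr) (use K in \<open>auto intro!: measurable_component_singleton\<close>)
  finally show ?thesis ..
qed

definition acoef :: "nat \<Rightarrow> (nat \<Rightarrow> real) \<Rightarrow> nat \<times> nat \<Rightarrow> real" where
  "acoef n w c = (if fst c < n - 1 then w (fst c) / sqrt (sqnorm (n-1) w)
                  else - sqrt (sqnorm (n-1) w) / sqrt (1 - sqnorm (n-1) w))"

lemma sum_col: "(\<Sum>c\<in>{..<n}\<times>{k}. g c) = (\<Sum>i<n. g (i,k))"
proof -
  have "{..<n}\<times>{k} = (\<lambda>i. (i,k)) ` {..<n}" by auto
  then show ?thesis by (simp add: sum.reindex inj_on_def)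
qed

lemma LL_lin:
  assumes n: "n \<ge> 1" and S: "0 < sqnorm (n-1) w" "sqnorm (n-1) w < 1"
  shows "LL n w x k / sqrt (sqnorm (n-1) w) = (\<Sum>c\<in>{..<n}\<times>{k}. acoef n w c * x c)"
    and "(\<Sum>c\<in>{..<n}\<times>{k}. (acoef n w c)\<^sup>2) = 1 / (1 - sqnorm (n-1) w)"
proof -
  obtain N where N: "n = Suc N" using n by (cases n) auto
  define S where "S = sqnorm N w"
  have S0: "0 < S" "S < 1" using S by (simp_all add: S_def N)
  have sq: "sqrt S * sqrt S = S" using S0 by simp
  have "(\<Sum>c\<in>{..<n}\<times>{k}. acoef n w c * x c) = (\<Sum>i<N. w i / sqrt S * x (i,k)) - sqrt S / sqrt (1 - S) * x (N,k)"
    unfolding sum_col N by (simp add: acoef_def S_def)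
  also have "\<dots> = LL n w x k / sqrt S"
  proof -
    have "S / sqrt S = sqrt S" using S0 by (simp add: real_div_sqrt)
    then show ?thesis
      unfolding LL_def N using S0
      by (simp add: S_def[symmetric] sum_divide_distrib diff_divide_distrib)
         (simp add: field_simps)
  qed
  finally show "LL n w x k / sqrt (sqnorm (n-1) w) = (\<Sum>c\<in>{..<n}\<times>{k}. acoef n w c * x c)"
    by (simp add: N S_def)
  have "(\<Sum>c\<in>{..<n}\<times>{k}. (acoef n w c)\<^sup>2) = (\<Sum>i<N. (w i)\<^sup>2 / S) + S / (1 - S)"
    unfolding sum_col N using S0 by (simp add: acoef_def S_def[symmetric] power_divide)
  also have "(\<Sum>i<N. (w i)\<^sup>2 / S) = 1"
    using S0 by (simp add: sum_divide_distrib[symmetric] S_def sqnorm_def)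
  also have "1 + S / (1 - S) = 1 / (1 - S)" using S0 by (simp add: field_simps)
  finally show "(\<Sum>c\<in>{..<n}\<times>{k}. (acoef n w c)\<^sup>2) = 1 / (1 - sqnorm (n-1) w)"
    by (simp add: N S_def)
qed

lemma aa_mom:
  assumes th: "0 \<le> \<theta>" "\<theta> \<le> 1" and n: "n \<ge> 1"
    and S: "0 < sqnorm (n-1) w" "sqnorm (n-1) w < 1" and mu: "\<mu> > 0" and k: "k < p"
  shows "(\<integral>\<^sup>+ x. ennreal (\<bar>aa n \<mu> w x k\<bar>^m) \<partial>PiM ({..<n}\<times>{..<p}) (\<lambda>_. BG \<theta>))
      \<le> ennreal ((1/\<mu>)^m * (1 / (1 - sqnorm (n-1) w))^m * GM m)"
proof -
  define J where "J = {..<n}\<times>{k}"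
  define Q where "Q x = (\<Sum>c\<in>J. acoef n w c * x c)" for x :: "nat \<times> nat \<Rightarrow> real"
  have QL: "Q x = LL n w x k / sqrt (sqnorm (n-1) w)" for x
    unfolding Q_def J_def using LL_lin(1)[OF n S] by simp
  have ptw: "\<bar>aa n \<mu> w x k\<bar>^m \<le> (1/\<mu>)^m * (Q x)^(2*m)" for x
  proof -
    have t: "(tanh (zz n w x k / \<mu>))\<^sup>2 < 1"
      using tanh_real_bounds[of "zz n w x k / \<mu>"] by (simp add: abs_square_less_1 abs_less_iff)
    have Q2: "(LL n w x k)\<^sup>2 / sqnorm (n-1) w = (Q x)\<^sup>2"
      unfolding QL using S by (simp add: power_divide)
    have a: "aa n \<mu> w x k = (1 - (tanh (zz n w x k / \<mu>))\<^sup>2) * ((1/\<mu>) * (Q x)\<^sup>2)"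
      unfolding aa_def Q2[symmetric] by (simp add: field_simps)
    have a0: "0 \<le> aa n \<mu> w x k" unfolding a using t mu by (intro mult_nonneg_nonneg) auto
    have a1: "aa n \<mu> w x k \<le> (1/\<mu>) * (Q x)\<^sup>2"
      unfolding a using t mu by (intro mult_left_le_one_le mult_nonneg_nonneg) auto
    have "\<bar>aa n \<mu> w x k\<bar>^m \<le> ((1/\<mu>) * (Q x)\<^sup>2)^m"
      using a0 a1 by (simp add: power_mono)
    also have "\<dots> = (1/\<mu>)^m * (Q x)^(2*m)" by (simp add: power_mult_distrib power_mult power_divide)
    finally show ?thesis .
  qed
  have [measurable]: "(\<lambda>x. ennreal ((Q x)^(2*m))) \<in> borel_measurable (PiM ({..<n}\<times>{..<p}) (\<lambda>_. BG \<theta>))"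
  proof -
    have "(\<lambda>x. LL n w x k) \<in> borel_measurable (PiM ({..<n}\<times>{..<p}) (\<lambda>_. BG \<theta>))"
      by (rule meas_col(3)) (use n k in auto)
    then show ?thesis unfolding QL by measurable
  qed
  have fm: "(\<lambda>y. ennreal ((\<Sum>c\<in>J. acoef n w c * y c)^(2*m))) \<in> borel_measurable (PiM J (\<lambda>_. BG \<theta>))"
    unfolding J_def by measurable
  have B: "(\<integral>\<^sup>+ x. ennreal ((Q x)^(2*m)) \<partial>PiM ({..<n}\<times>{..<p}) (\<lambda>_. BG \<theta>))
      \<le> ennreal ((1 / (1 - sqnorm (n-1) w))^m * GM m)"
  proof -
    have "(\<integral>\<^sup>+ x. ennreal ((Q x)^(2*m)) \<partial>PiM ({..<n}\<times>{..<p}) (\<lambda>_. BG \<theta>))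
      = (\<integral>\<^sup>+ x. ennreal ((\<Sum>c\<in>J. acoef n w c * (restrict x J) c)^(2*m)) \<partial>PiM ({..<n}\<times>{..<p}) (\<lambda>_. BG \<theta>))"
      unfolding Q_def by (intro nn_integral_cong) (simp cong: sum.cong)
    also have "\<dots> = (\<integral>\<^sup>+ y. ennreal ((\<Sum>c\<in>J. acoef n w c * y c)^(2*m)) \<partial>PiM J (\<lambda>_. BG \<theta>))"
      by (rule marginal[OF th _ _ fm]) (use k in \<open>auto simp: J_def\<close>)
    also have "\<dots> \<le> ennreal ((\<Sum>c\<in>J. (acoef n w c)\<^sup>2)^m * GM m)"
      by (rule lin_moment[OF th]) (simp add: J_def)
    also have "(\<Sum>c\<in>J. (acoef n w c)\<^sup>2) = 1 / (1 - sqnorm (n-1) w)"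
      unfolding J_def by (rule LL_lin(2)[OF n S])
    finally show ?thesis .
  qed
  have "(\<integral>\<^sup>+ x. ennreal (\<bar>aa n \<mu> w x k\<bar>^m) \<partial>PiM ({..<n}\<times>{..<p}) (\<lambda>_. BG \<theta>))
      \<le> (\<integral>\<^sup>+ x. ennreal ((1/\<mu>)^m) * ennreal ((Q x)^(2*m)) \<partial>PiM ({..<n}\<times>{..<p}) (\<lambda>_. BG \<theta>))"
    using mu by (intro nn_integral_mono) (simp add: ennreal_mult[symmetric] ptw even_pow_nonneg)
  also have "\<dots> = ennreal ((1/\<mu>)^m) * (\<integral>\<^sup>+ x. ennreal ((Q x)^(2*m)) \<partial>PiM ({..<n}\<times>{..<p}) (\<lambda>_. BG \<theta>))"
    by (rule nn_integral_cmult) measurable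
  also have "\<dots> \<le> ennreal ((1/\<mu>)^m) * ennreal ((1 / (1 - sqnorm (n-1) w))^m * GM m)"
    by (rule mult_left_mono[OF B]) simp
  finally show ?thesis
    using mu S GM_pos[of m] by (simp add: ennreal_mult[symmetric] mult.assoc)
qed

lemma bb_mom:
  assumes th: "0 \<le> \<theta>" "\<theta> \<le> 1" and n: "n \<ge> 1"
    and S: "sqnorm (n-1) w < 1" and k: "k < p" and m: "m \<ge> 2"
  shows "(\<integral>\<^sup>+ x. ennreal (\<bar>bb n \<mu> w x k\<bar>^m) \<partial>PiM ({..<n}\<times>{..<p}) (\<lambda>_. BG \<theta>))
      \<le> ennreal ((1 / sqrt (1 - sqnorm (n-1) w) ^ 3)^m * (fact m / 2))"
proof -
  define c where "c = 1 / sqrt (1 - sqnorm (n-1) w) ^ 3"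
  have c0: "0 < c" using S by (simp add: c_def)
  have ptw: "\<bar>bb n \<mu> w x k\<bar>^m \<le> c^m * \<bar>x (n-1,k)\<bar>^m" for x
  proof -
    have t: "\<bar>tanh (zz n w x k / \<mu>)\<bar> \<le> 1"
      using tanh_real_bounds[of "zz n w x k / \<mu>"] by (simp add: abs_le_iff)
    have "\<bar>bb n \<mu> w x k\<bar> = \<bar>tanh (zz n w x k / \<mu>)\<bar> * (c * \<bar>x (n-1,k)\<bar>)"
      unfolding bb_def c_def using S by (simp add: abs_mult abs_divide)
    also have "\<dots> \<le> 1 * (c * \<bar>x (n-1,k)\<bar>)"
      using t c0 by (intro mult_right_mono) auto
    finally have "\<bar>bb n \<mu> w x k\<bar> \<le> c * \<bar>x (n-1,k)\<bar>" by simp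
    then have "\<bar>bb n \<mu> w x k\<bar>^m \<le> (c * \<bar>x (n-1,k)\<bar>)^m" by (intro power_mono) auto
    then show ?thesis by (simp add: power_mult_distrib)
  qed
  have "(\<integral>\<^sup>+ x. ennreal (\<bar>bb n \<mu> w x k\<bar>^m) \<partial>PiM ({..<n}\<times>{..<p}) (\<lambda>_. BG \<theta>))
      \<le> (\<integral>\<^sup>+ x. ennreal (c^m * \<bar>x (n-1,k)\<bar>^m) \<partial>PiM ({..<n}\<times>{..<p}) (\<lambda>_. BG \<theta>))"
    by (intro nn_integral_mono ennreal_leI ptw)
  also have "\<dots> = (\<integral>\<^sup>+ x. ennreal (c^m) * ennreal (\<bar>x (n-1,k)\<bar>^m) \<partial>PiM ({..<n}\<times>{..<p}) (\<lambda>_. BG \<theta>))"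
    using c0 by (intro nn_integral_cong) (simp add: ennreal_mult)
  also have "\<dots> = ennreal (c^m) * (\<integral>\<^sup>+ x. ennreal (\<bar>x (n-1,k)\<bar>^m) \<partial>PiM ({..<n}\<times>{..<p}) (\<lambda>_. BG \<theta>))"
  proof (rule nn_integral_cmult)
    have "(\<lambda>x. x (n-1,k)) \<in> measurable (PiM ({..<n}\<times>{..<p}) (\<lambda>_. BG \<theta>)) (BG \<theta>)"
      by (rule measurable_component_singleton) (use n k in auto)
    then have [measurable]: "(\<lambda>x. x (n-1,k)) \<in> borel_measurable (PiM ({..<n}\<times>{..<p}) (\<lambda>_. BG \<theta>))"
      by (simp add: measurable_cong_sets[OF refl sets_BG])
    show "(\<lambda>x. ennreal (\<bar>x (n-1,k)\<bar>^m)) \<in> borel_measurable (PiM ({..<n}\<times>{..<p}) (\<lambda>_. BG \<theta>))"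
      by measurable
  qed
  also have "(\<integral>\<^sup>+ x. ennreal (\<bar>x (n-1,k)\<bar>^m) \<partial>PiM ({..<n}\<times>{..<p}) (\<lambda>_. BG \<theta>))
      = (\<integral>\<^sup>+ y. ennreal (\<bar>y\<bar>^m) \<partial>BG \<theta>)"
    by (rule component_mom[OF th, where f="\<lambda>y. ennreal (\<bar>y\<bar>^m)"]) (use n k in auto)
  also have "ennreal (c^m) * \<dots> \<le> ennreal (c^m) * ennreal (fact m / 2)"
    by (rule mult_left_mono[OF BG_abs[OF th m]]) simp
  finally show ?thesis using c0 by (simp add: c_def ennreal_mult[symmetric])
qed

lemma GM_Suc: "GM (Suc m) = (2 * real m + 1) * GM m"
proof -
  have f1: "fact (2 * Suc m) = (2*real m+2)*(2*real m+1)*(fact (2*m) :: real)"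
    by (simp add: algebra_simps)
  have f2: "fact (Suc m) = (real m+1)*(fact m :: real)" by (simp add: algebra_simps)
  have g: "(2*real m+2)*(2*real m+1)*F / (2^Suc m * ((real m+1)*G)) = (2 * real m + 1) * (F / (2^m * G))"
    if "G > 0" for F G :: real
  proof -
    have e: "2^Suc m * ((real m+1)*G) = (2*real m+2) * (2^m*G)" by (simp add: algebra_simps)
    have "(2*real m+2)*(2*real m+1)*F / (2^Suc m * ((real m+1)*G))
        = ((2*real m+2)*((2*real m+1)*F)) / ((2*real m+2) * (2^m*G))" unfolding e by (simp only: mult.assoc)
    also have "\<dots> = ((2*real m+1)*F) / (2^m*G)"
      by (rule mult_divide_mult_cancel_left) simp
    finally show ?thesis by simp
  qed
  show ?thesis unfolding GM_def f1 f2 by (rule g) simp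
qed

lemma GM_le: "m \<ge> 1 \<Longrightarrow> GM m \<le> 2^(m-1) * fact m"
proof (induction m rule: dec_induct)
  case base then show ?case by (simp add: GM_def)
next
  case (step m)
  have "GM (Suc m) = (2 * real m + 1) * GM m" by (rule GM_Suc)
  also have "\<dots> \<le> (2 * real m + 1) * (2^(m-1) * fact m)"
    using step.IH by (intro mult_left_mono) auto
  also have "\<dots> \<le> (2 * real m + 2) * (2^(m-1) * fact m)"
    by (intro mult_right_mono) auto
  also have "\<dots> = 2^(Suc m - 1) * fact (Suc m)"
    using step.hyps by (cases m) (auto simp: algebra_simps)
  finally show ?case .
qed

lemma indep_ab:
  fixes n p :: nat
  assumes th: "0 \<le> \<theta>" "\<theta> \<le> 1" and n: "n \<ge> 1" and p: "p \<ge> 1"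
  shows "prob_space.indep_vars (PiM ({..<n}\<times>{..<p}) (\<lambda>_. BG \<theta>)) (\<lambda>_. borel) (\<lambda>k x. aa n \<mu> w x k) {..<p}"
    and "prob_space.indep_vars (PiM ({..<n}\<times>{..<p}) (\<lambda>_. BG \<theta>)) (\<lambda>_. borel) (\<lambda>k x. bb n \<mu> w x k) {..<p}"
proof -
  have PS: "prob_space (PiM ({..<n}\<times>{..<p}) (\<lambda>_. BG \<theta>))"
    by (rule prob_space_PiM) (use prob_space_BG[OF th] in auto)
  note I0 = indep_cols[OF th n p]
  have "prob_space.indep_vars (PiM ({..<n}\<times>{..<p}) (\<lambda>_. BG \<theta>)) (\<lambda>_. borel)
      (\<lambda>k x. aa n \<mu> w (restrict x ({..<n}\<times>{k})) k) {..<p}"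
    by (rule prob_space.indep_vars_compose2[OF PS I0]) (rule meas_col(1)[OF n], simp)
  then show "prob_space.indep_vars (PiM ({..<n}\<times>{..<p}) (\<lambda>_. BG \<theta>)) (\<lambda>_. borel) (\<lambda>k x. aa n \<mu> w x k) {..<p}"
    by (simp add: col_dep[OF n])
  have "prob_space.indep_vars (PiM ({..<n}\<times>{..<p}) (\<lambda>_. BG \<theta>)) (\<lambda>_. borel)
      (\<lambda>k x. bb n \<mu> w (restrict x ({..<n}\<times>{k})) k) {..<p}"
    by (rule prob_space.indep_vars_compose2[OF PS I0]) (rule meas_col(2)[OF n], simp)
  then show "prob_space.indep_vars (PiM ({..<n}\<times>{..<p}) (\<lambda>_. BG \<theta>)) (\<lambda>_. borel) (\<lambda>k x. bb n \<mu> w x k) {..<p}"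
    by (simp add: col_dep[OF n])
qed

lemma pow_split: "m \<ge> 2 \<Longrightarrow> (x::real)\<^sup>2 * x^(m-2) = x^m"
  by (metis le_add_diff_inverse power_add)

lemma num_aa:
  assumes m: "m \<ge> 2" and mu: "\<mu> > 0" and n: "n \<ge> 1"
    and S: "0 < 1 - S" "1 / (1 - S) \<le> 4 * real n"
  shows "(1/\<mu>)^m * (1 / (1 - S))^m * GM m \<le> fact m / 2 * (8 * real n / \<mu>)\<^sup>2 * (8 * real n / \<mu>)^(m-2)"
proof -
  have R: "(8 * real n / \<mu>)\<^sup>2 * (8 * real n / \<mu>)^(m-2) = (8 * real n / \<mu>)^m"
    using m by (rule pow_split)
  have "(1/\<mu>)^m * (1 / (1 - S))^m * GM m \<le> (1/\<mu>)^m * (4 * real n)^m * (2^(m-1) * fact m)"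
    using S mu GM_le[of m] m GM_pos[of m]
    by (intro mult_mono power_mono mult_nonneg_nonneg) auto
  also have "\<dots> = fact m / 2 * (8 * real n / \<mu>)^m"
  proof -
    have "(2::real)^m = 2 * 2^(m-1)" using m by (cases m) auto
    then have e: "(8::real)^m = 2 * (4^m * 2^(m-1))"
      using power_mult_distrib[of "4::real" 2 m] by simp
    show ?thesis by (simp add: power_mult_distrib power_divide field_simps e)
  qed
  finally show ?thesis using R by (simp add: mult.assoc)
qed

lemma num_bb:
  fixes c R :: real
  assumes m: "m \<ge> 2" and c: "0 \<le> c" "c \<le> R"
  shows "c^m * (fact m / 2) \<le> fact m / 2 * R\<^sup>2 * R^(m-2)"
proof -
  have "R\<^sup>2 * R^(m-2) = R^m" using m by (rule pow_split)
  moreover have "c^m \<le> R^m" using c by (intro power_mono) auto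
  ultimately show ?thesis by (simp add: mult.commute mult.left_commute mult_left_mono)
qed

theorem mainTheorem9:
  fixes n p :: nat and \<theta> \<mu> t :: real and w :: "nat \<Rightarrow> real"
  assumes "0 < \<theta>" "\<theta> < 1"
    and "0 < \<mu>" "\<mu> \<le> 1 / sqrt (real n)"
    and "w \<in> Gamma_set n" "sqnorm (n - 1) w \<noteq> 0"
    and "0 < t"
  shows "let M = BG_matrix n p \<theta>;
             Z = (\<lambda>X. hess_quad (n - 1) (\<lambda>v. g_obj n p \<mu> v X) w / sqnorm (n - 1) w)
         in measure M {X \<in> space M. \<bar>Z X - (\<integral>Y. Z Y \<partial>M)\<bar> \<ge> t}
            \<le> 4 * exp (- (real p * \<mu>\<^sup>2 * t\<^sup>2) / (512 * (real n)\<^sup>2 + 32 * real n * \<mu> * t))"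
proof -
  have th: "0 \<le> \<theta>" "\<theta> \<le> 1" using assms by auto
  have mu: "\<mu> > 0" using assms by simp
  define M where "M = BG_matrix n p \<theta>"
  have M': "M = PiM ({..<n}\<times>{..<p}) (\<lambda>_. BG \<theta>)" unfolding M_def BG_matrix_def ..
  define S where "S = sqnorm (n-1) w"
  define Z where "Z X = hess_quad (n - 1) (\<lambda>v. g_obj n p \<mu> v X) w / sqnorm (n - 1) w" for X
  define RHS where "RHS = 4 * exp (- (real p * \<mu>\<^sup>2 * t\<^sup>2) / (512 * (real n)\<^sup>2 + 32 * real n * \<mu> * t))"
  have PS: "prob_space M" unfolding M' by (rule prob_space_PiM) (use prob_space_BG[OF th] in auto)
  interpret P: prob_space M by (rule PS)
  have n2: "n \<ge> 2"
  proof (rule ccontr)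
    assume "\<not> n \<ge> 2"
    then have "n - 1 = 0" by simp
    then show False using assms(6) by (simp add: sqnorm_def)
  qed
  have n1: "n \<ge> 1" using n2 by simp
  have S0: "0 < S"
  proof -
    have "0 \<le> S" unfolding S_def sqnorm_def by (intro sum_nonneg) auto
    then show ?thesis using assms(6) S_def by simp
  qed
  have SG: "S < (4 * real n - 1) / (4 * real n)" using assms(5) by (simp add: Gamma_set_def S_def)
  have n0: "0 < real n" using n1 by simp
  have S1: "1 / (4 * real n) < 1 - S"
  proof -
    have "(4 * real n - 1) / (4 * real n) = 1 - 1 / (4 * real n)" using n0 by (simp add: field_simps)
    then show ?thesis using SG by simp
  qed
  have Sl1: "S < 1" using S1 n0 by (smt (verit) divide_pos_pos)
  have inv: "1 / (1 - S) \<le> 4 * real n"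
  proof -
    have pos: "0 < 1 - S" using Sl1 by simp
    have "1 < 4 * real n * (1 - S)" using S1 n0 by (simp add: field_simps)
    then show ?thesis using pos by (simp add: field_simps)
  qed
  have RHS0: "0 \<le> RHS" unfolding RHS_def by simp
  have main: "measure M {X \<in> space M. t \<le> \<bar>Z X - (\<integral>Y. Z Y \<partial>M)\<bar>} \<le> RHS"
  proof (cases "p = 0")
    case True
    have "measure M {X \<in> space M. t \<le> \<bar>Z X - (\<integral>Y. Z Y \<partial>M)\<bar>} \<le> 1" by (rule P.prob_le_1)
    also have "1 \<le> RHS" unfolding RHS_def using True by simp
    finally show ?thesis .
  next
    case False
    then have p1: "p \<ge> 1" by simp
    define R where "R = 8 * real n / \<mu>"
    have R0: "0 < R" unfolding R_def using n0 mu by simp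
    have Zeq: "Z X = (1 / real p) * (\<Sum>k<p. aa n \<mu> w X k - bb n \<mu> w X k)" for X
      unfolding Z_def using Z_eq[of n w \<mu> p X] S0 Sl1 mu by (simp add: S_def)
    have cR: "1 / sqrt (1 - S) ^ 3 \<le> R"
    proof -
      define q where "q = 1 / sqrt (1 - S)"
      have q0: "0 < q" using Sl1 by (simp add: q_def)
      have q2: "q\<^sup>2 = 1 / (1 - S)" using Sl1 by (simp add: q_def power_divide)
      have "q\<^sup>2 \<le> (2 * sqrt (real n))\<^sup>2" using q2 inv by (simp add: power_mult_distrib)
      then have q1: "q \<le> 2 * sqrt (real n)" by (rule power2_le_imp_le) simp
      have "q^3 = q\<^sup>2 * q" by (simp add: power2_eq_square power3_eq_cube)
      also have "\<dots> \<le> (4 * real n) * (2 * sqrt (real n))"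
        using q2 inv q1 q0 by (intro mult_mono) auto
      also have "\<dots> \<le> (4 * real n) * (2 * (1/\<mu>))"
      proof -
        have "sqrt (real n) > 0" using n0 by simp
        then have "sqrt (real n) \<le> 1/\<mu>" using assms(4) mu by (simp add: field_simps)
        then show ?thesis using n0 by (intro mult_left_mono) auto
      qed
      also have "\<dots> = R" unfolding R_def by simp
      finally show ?thesis by (simp add: q_def power_one_over)
    qed
    have Mm: "(\<lambda>x. aa n \<mu> w x k) \<in> borel_measurable M" "(\<lambda>x. bb n \<mu> w x k) \<in> borel_measurable M"
      if "k < p" for k unfolding M' using meas_col[OF n1, of k "{..<p}"] that by auto
    have momA: "(\<integral>\<^sup>+ x. ennreal (\<bar>aa n \<mu> w x k\<bar>^m) \<partial>M) \<le> ennreal (fact m / 2 * R\<^sup>2 * R^(m-2))"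
      if "k \<in> {..<p}" "m \<ge> 2" for k m
    proof -
      have "(\<integral>\<^sup>+ x. ennreal (\<bar>aa n \<mu> w x k\<bar>^m) \<partial>M) \<le> ennreal ((1/\<mu>)^m * (1 / (1 - S))^m * GM m)"
        unfolding M' S_def by (rule aa_mom[OF th n1 _ _ mu]) (use S0 Sl1 that in \<open>auto simp: S_def\<close>)
      also have "\<dots> \<le> ennreal (fact m / 2 * R\<^sup>2 * R^(m-2))"
        unfolding R_def by (rule ennreal_leI, rule num_aa[OF that(2) mu n1]) (use Sl1 inv in auto)
      finally show ?thesis .
    qed
    have momB: "(\<integral>\<^sup>+ x. ennreal (\<bar>bb n \<mu> w x k\<bar>^m) \<partial>M) \<le> ennreal (fact m / 2 * R\<^sup>2 * R^(m-2))"
      if "k \<in> {..<p}" "m \<ge> 2" for k m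
    proof -
      have "(\<integral>\<^sup>+ x. ennreal (\<bar>bb n \<mu> w x k\<bar>^m) \<partial>M) \<le> ennreal ((1 / sqrt (1 - S) ^ 3)^m * (fact m / 2))"
        unfolding M' S_def by (rule bb_mom[OF th n1]) (use Sl1 that in \<open>auto simp: S_def\<close>)
      also have "\<dots> \<le> ennreal (fact m / 2 * R\<^sup>2 * R^(m-2))"
        by (rule ennreal_leI, rule num_bb[OF that(2) _ cR]) (use Sl1 in auto)
      finally show ?thesis .
    qed
    have intA: "integrable M (\<lambda>x. aa n \<mu> w x k)" if "k < p" for k
      by (rule P.integrable_of_mom2[OF Mm(1)[OF that], of "R\<^sup>2"]) (use momA[of k 2] that in simp)
    have intB: "integrable M (\<lambda>x. bb n \<mu> w x k)" if "k < p" for k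
      by (rule P.integrable_of_mom2[OF Mm(2)[OF that], of "R\<^sup>2"]) (use momB[of k 2] that in simp)
    define EA where "EA k = (\<integral>x. aa n \<mu> w x k \<partial>M)" for k
    define EB where "EB k = (\<integral>x. bb n \<mu> w x k \<partial>M)" for k
    define DA where "DA x = (\<Sum>k\<in>{..<p}. aa n \<mu> w x k - EA k)" for x
    define DB where "DB x = (\<Sum>k\<in>{..<p}. bb n \<mu> w x k - EB k)" for x
    have EZ: "(\<integral>Y. Z Y \<partial>M) = (1 / real p) * ((\<Sum>k<p. EA k) - (\<Sum>k<p. EB k))"
    proof -
      have "(\<integral>Y. Z Y \<partial>M) = (\<integral>Y. (1 / real p) * (\<Sum>k<p. aa n \<mu> w Y k - bb n \<mu> w Y k) \<partial>M)"
        unfolding Zeq ..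
      also have "\<dots> = (1 / real p) * (\<integral>Y. (\<Sum>k<p. aa n \<mu> w Y k - bb n \<mu> w Y k) \<partial>M)"
        by (rule integral_mult_right_zero)
      also have "(\<integral>Y. (\<Sum>k<p. aa n \<mu> w Y k - bb n \<mu> w Y k) \<partial>M) = (\<Sum>k<p. (\<integral>Y. aa n \<mu> w Y k - bb n \<mu> w Y k \<partial>M))"
        by (rule Bochner_Integration.integral_sum) (use intA intB in auto)
      also have "\<dots> = (\<Sum>k<p. EA k - EB k)"
        unfolding EA_def EB_def
        by (intro sum.cong refl Bochner_Integration.integral_diff) (use intA intB in auto)
      finally show ?thesis by (simp add: sum_subtractf)
    qed
    have ZD: "Z X - (\<integral>Y. Z Y \<partial>M) = (1 / real p) * (DA X - DB X)" for X
      unfolding EZ unfolding Zeq DA_def DB_def by (simp add: sum_subtractf algebra_simps)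
    have [measurable]: "DA \<in> borel_measurable M" "DB \<in> borel_measurable M"
      unfolding DA_def DB_def using Mm by auto
    define A where "A = {x \<in> space M. real (card {..<p}) * (t/2) \<le> \<bar>DA x\<bar>}"
    define B where "B = {x \<in> space M. real (card {..<p}) * (t/2) \<le> \<bar>DB x\<bar>}"
    have [measurable]: "A \<in> sets M" "B \<in> sets M" unfolding A_def B_def by measurable
    have sub: "{X \<in> space M. t \<le> \<bar>Z X - (\<integral>Y. Z Y \<partial>M)\<bar>} \<subseteq> A \<union> B"
    proof
      fix X assume X: "X \<in> {X \<in> space M. t \<le> \<bar>Z X - (\<integral>Y. Z Y \<partial>M)\<bar>}"
      show "X \<in> A \<union> B"
      proof (rule ccontr)
        assume "X \<notin> A \<union> B"
        then have a: "\<bar>DA X\<bar> < real p * (t/2)" and b: "\<bar>DB X\<bar> < real p * (t/2)"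
          using X by (auto simp: A_def B_def)
        have "\<bar>DA X - DB X\<bar> < real p * t" using a b by linarith
        then have "(1 / real p) * \<bar>DA X - DB X\<bar> < (1 / real p) * (real p * t)"
          using p1 by (intro mult_strict_left_mono) auto
        then have "\<bar>Z X - (\<integral>Y. Z Y \<partial>M)\<bar> < t" unfolding ZD using p1 by (simp add: abs_mult)
        then show False using X by simp
      qed
    qed
    define E where "E = exp (- (real (card {..<p}) * (t/2)\<^sup>2 / (2 * R\<^sup>2 + 2 * R * (t/2))))"
    have bA: "measure M A \<le> 2 * E"
      unfolding A_def DA_def EA_def E_def
      by (rule P.bernstein_abs[OF _ _ _ R0])
         (use indep_ab(1)[OF th n1 p1, of \<mu> w] momA R0 assms(7) in \<open>auto simp: M'\<close>)
    have bB: "measure M B \<le> 2 * E"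
      unfolding B_def DB_def EB_def E_def
      by (rule P.bernstein_abs[OF _ _ _ R0])
         (use indep_ab(2)[OF th n1 p1, of \<mu> w] momB R0 assms(7) in \<open>auto simp: M'\<close>)
    have Eeq: "E = exp (- (real p * \<mu>\<^sup>2 * t\<^sup>2) / (512 * (real n)\<^sup>2 + 32 * real n * \<mu> * t))"
    proof -
      have "real p * (t/2)\<^sup>2 / (2 * R\<^sup>2 + 2 * R * (t/2)) = real p * \<mu>\<^sup>2 * t\<^sup>2 / (512 * (real n)\<^sup>2 + 32 * real n * \<mu> * t)"
        unfolding R_def using mu n0 assms(7) by (simp add: field_simps power2_eq_square)
      then show ?thesis unfolding E_def by simp
    qed
    have "measure M {X \<in> space M. t \<le> \<bar>Z X - (\<integral>Y. Z Y \<partial>M)\<bar>} \<le> measure M (A \<union> B)"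
      using sub by (intro P.finite_measure_mono) auto
    also have "\<dots> \<le> measure M A + measure M B" by (intro measure_Un_le) auto
    also have "\<dots> \<le> 4 * E" using bA bB by simp
    also have "\<dots> = RHS" unfolding Eeq RHS_def ..
    finally show ?thesis .
  qed
  then show ?thesis unfolding Let_def M_def Z_def RHS_def by simp
qed


end
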